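(* For any $K>0$ and $\varepsilon>0$ the following holds. Let $(\Sigma,f,E,A)$ be a two-dimensional periodic linear cocycle that is diagonalizable with positive eigenvalues, bounded by $K$, and admitting no dominated splitting. Then there exist a point $X\in\Sigma$ and a continuous path $\gamma:[0,1]\to C(X)$ such that: (1) $\gamma(0)=A|_{\mathcal{O}(X)}$; (2) $\mathrm{diam}(\gamma)<\varepsilon$; (3) $\det\widetilde{\gamma(t)}$ is independent of $t$; (4) writing $\lambda_m(t)\le\lambda_b(t)$ for the absolute values of the eigenvalues of $\widetilde{\gamma(t)}$, for $s<t$ one has $\lambda_m(s)\le\lambda_m(t)$ and $\lambda_b(s)\ge\lambda_b(t)$; (5) $\widetilde{\gamma(1)}$ has two non-real complex eigenvalues.
   Context: A linear cocycle $(\Sigma,f,E,A)$ consists of a topological space $\Sigma$, a homeomorphism $f$ of $\Sigma$, a Riemannian vector bundle $E$ over $\Sigma$ (here of rank $2$), and linear isomorphisms $A(x):E(x)\to E(f(x))$; $A^n(x)$ denotes the composition along the orbit. It is periodic if every $x\in\Sigma$ is $f$-periodic; diagonalizable with positive eigenvalues if at each $x$ the return map $A^{\mathrm{per}(x)}(x)$ is diagonalizable with positive real eigenvalues. It is bounded by $K$ if $\sup_x\|A(x)\|<K$ and $\sup_x\|A(x)^{-1}\|<K$. It admits a dominated splitting if $E=F\oplus G$ with $F,G$ non-trivial $A$-invariant subbundles and some $n\ge1$ with $\|A^n(x)|_F\|\,\|A^{-n}(f^n(x))|_G\|<1/2$ for all $x$. For $X\in\Sigma$ with orbit $\mathcal{O}(X)$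 and period $p$, $C(X)$ is the set of families $\sigma=(\sigma(x))_{x\in\mathcal{O}(X)}$ of linear isomorphisms $\sigma(x):E(x)\to E(f(x))$, with distance $\mathrm{dist}(\sigma_1,\sigma_2)=\max\{\max_x\|\sigma_1(x)-\sigma_2(x)\|,\max_x\|\sigma_1(x)^{-1}-\sigma_2(x)^{-1}\|\}$; $\mathrm{diam}(\gamma)=\max_{s,t}\mathrm{dist}(\gamma(s),\gamma(t))$; $\tilde\sigma=\sigma(f^{p-1}(X))\circ\cdots\circ\sigma(X)$ is the first return map. *)

theory Defs
  imports "HOL-Analysis.Analysis"
begin

text \<open>Rank-2 Riemannian bundle over Sigma modelled (fiberwise via orthonormal frames)
  as the trivial bundle Sigma x R^2; linear maps E(x) -> E(f x) are 2x2 real matrices.\<close>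

type_synonym mat2 = "real^2^2"

definition opnorm :: "mat2 \<Rightarrow> real" where
  "opnorm M = onorm (\<lambda>v. M *v v)"

definition restr_norm :: "mat2 \<Rightarrow> (real^2) set \<Rightarrow> real" where
  "restr_norm M S = Sup ((\<lambda>v. norm (M *v v)) ` {v \<in> S. norm v = 1})"

fun cocycle_pow :: "('a \<Rightarrow> mat2) \<Rightarrow> ('a \<Rightarrow> 'a) \<Rightarrow> nat \<Rightarrow> 'a \<Rightarrow> mat2" where
  "cocycle_pow A f 0 x = mat 1"
| "cocycle_pow A f (Suc n) x = A ((f ^^ n) x) ** cocycle_pow A f n x"

definition is_linear_cocycle :: "('a::topological_space \<Rightarrow> 'a) \<Rightarrow> ('a \<Rightarrow> mat2) \<Rightarrow> bool" where
  "is_linear_cocycle f A \<longleftrightarrow> (\<exists>g. homeomorphism UNIV UNIV f g) \<and> (\<forall>x. invertible (A x))"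

definition periodic_map :: "('a \<Rightarrow> 'a) \<Rightarrow> bool" where
  "periodic_map f \<longleftrightarrow> (\<forall>x. \<exists>p>0. (f ^^ p) x = x)"

definition period :: "('a \<Rightarrow> 'a) \<Rightarrow> 'a \<Rightarrow> nat" where
  "period f x = (LEAST p. p > 0 \<and> (f ^^ p) x = x)"

definition orbit :: "('a \<Rightarrow> 'a) \<Rightarrow> 'a \<Rightarrow> 'a set" where
  "orbit f x = range (\<lambda>k. (f ^^ k) x)"

definition return_map :: "('a \<Rightarrow> 'a) \<Rightarrow> ('a \<Rightarrow> mat2) \<Rightarrow> 'a \<Rightarrow> mat2" where
  "return_map f \<sigma> X = cocycle_pow \<sigma> f (period f X) X"

definition diagonalizable_pos :: "('a \<Rightarrow> 'a) \<Rightarrow> ('a \<Rightarrow> mat2) \<Rightarrow> bool" where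
  "diagonalizable_pos f A \<longleftrightarrow>
     (\<forall>x. \<exists>(P::mat2) (d::2 \<Rightarrow> real). invertible P \<and> (\<forall>i. d i > (0::real)) \<and>
        return_map f A x = P ** (\<chi> i j. if i = j then d i else 0) ** matrix_inv P)"

definition bounded_by :: "('a \<Rightarrow> mat2) \<Rightarrow> real \<Rightarrow> bool" where
  "bounded_by A K \<longleftrightarrow>
     (\<exists>K'<K. \<forall>x. opnorm (A x) \<le> K') \<and> (\<exists>K'<K. \<forall>x. opnorm (matrix_inv (A x)) \<le> K')"

definition dominated_splitting :: "('a \<Rightarrow> 'a) \<Rightarrow> ('a \<Rightarrow> mat2) \<Rightarrow> bool" where
  "dominated_splitting f A \<longleftrightarrow>
     (\<exists>F G :: 'a \<Rightarrow> (real^2) set.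
        (\<forall>x. subspace (F x) \<and> subspace (G x) \<and> F x \<noteq> {0} \<and> G x \<noteq> {0}
             \<and> F x \<inter> G x = {0} \<and> (\<forall>v. \<exists>u\<in>F x. \<exists>w\<in>G x. v = u + w)
             \<and> (\<lambda>v. A x *v v) ` F x = F (f x) \<and> (\<lambda>v. A x *v v) ` G x = G (f x))
      \<and> (\<exists>n\<ge>1. \<forall>x. restr_norm (cocycle_pow A f n x) (F x)
                   * restr_norm (matrix_inv (cocycle_pow A f n x)) (G ((f ^^ n) x)) < 1/2))"

definition cdist :: "('a \<Rightarrow> 'a) \<Rightarrow> 'a \<Rightarrow> ('a \<Rightarrow> mat2) \<Rightarrow> ('a \<Rightarrow> mat2) \<Rightarrow> real" where
  "cdist f X \<sigma>1 \<sigma>2 = max (Max ((\<lambda>x. opnorm (\<sigma>1 x - \<sigma>2 x)) ` orbit f X))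
                          (Max ((\<lambda>x. opnorm (matrix_inv (\<sigma>1 x) - matrix_inv (\<sigma>2 x))) ` orbit f X))"

definition in_C :: "('a \<Rightarrow> 'a) \<Rightarrow> 'a \<Rightarrow> ('a \<Rightarrow> mat2) \<Rightarrow> bool" where
  "in_C f X \<sigma> \<longleftrightarrow> (\<forall>x\<in>orbit f X. invertible (\<sigma> x))"

definition C_path :: "('a \<Rightarrow> 'a) \<Rightarrow> 'a \<Rightarrow> (real \<Rightarrow> 'a \<Rightarrow> mat2) \<Rightarrow> bool" where
  "C_path f X \<gamma> \<longleftrightarrow> (\<forall>t\<in>{0..1}. in_C f X (\<gamma> t)) \<and>
     (\<forall>t\<in>{0..1}. \<forall>e>0. \<exists>d>0. \<forall>s\<in>{0..1}. \<bar>s - t\<bar> < d \<longrightarrow> cdist f X (\<gamma> s) (\<gamma> t) < e)"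

definition C_diam :: "('a \<Rightarrow> 'a) \<Rightarrow> 'a \<Rightarrow> (real \<Rightarrow> 'a \<Rightarrow> mat2) \<Rightarrow> real" where
  "C_diam f X \<gamma> = Sup {cdist f X (\<gamma> s) (\<gamma> t) | s t. s \<in> {0..1} \<and> t \<in> {0..1}}"

definition cx_eigenvalues :: "mat2 \<Rightarrow> complex set" where
  "cx_eigenvalues M = {z. det (mat z - (\<chi> i j. complex_of_real (M $ i $ j))) = 0}"

definition lam_m :: "mat2 \<Rightarrow> real" where
  "lam_m M = Min (cmod ` cx_eigenvalues M)"

definition lam_b :: "mat2 \<Rightarrow> real" where
  "lam_b M = Max (cmod ` cx_eigenvalues M)"

end

theory Submission
  imports Defs
begin


definition M2 :: "real \<Rightarrow> real \<Rightarrow> real \<Rightarrow> real \<Rightarrow> mat2" where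
  "M2 a b c d = (\<chi> i j. if i = 1 then (if j = 1 then a else b) else (if j = 1 then c else d))"

definition V2 :: "real \<Rightarrow> real \<Rightarrow> real^2" where
  "V2 x y = (\<chi> i. if i = 1 then x else y)"

lemma one_neq_two_2[simp]: "(1::2) \<noteq> 2" "(2::2) \<noteq> 1"
  by (simp_all add: eq_commute)

lemma M2_nth[simp]: "M2 a b c d $ 1 $ 1 = a" "M2 a b c d $ 1 $ 2 = b"
   "M2 a b c d $ 2 $ 1 = c" "M2 a b c d $ 2 $ 2 = d"
  by (simp_all add: M2_def)

lemma V2_nth[simp]: "V2 x y $ 1 = x" "V2 x y $ 2 = y"
  by (simp_all add: V2_def)

lemma M2_eta: "M = M2 (M$1$1) (M$1$2) (M$2$1) (M$2$2)"
  unfolding M2_def by (simp add: vec_eq_iff forall_2)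

lemma V2_eta: "v = V2 (v$1) (v$2)"
  unfolding V2_def by (simp add: vec_eq_iff forall_2)

lemma M2_eq_iff: "M2 a b c d = M2 a' b' c' d' \<longleftrightarrow> a = a' \<and> b = b' \<and> c = c' \<and> d = d'"
  by (metis M2_nth)

lemma V2_eq_iff: "V2 a b = V2 a' b' \<longleftrightarrow> a = a' \<and> b = b'"
  by (metis V2_nth)

lemma M2_mult[simp]: "M2 a b c d ** M2 e f g h = M2 (a*e+b*g) (a*f+b*h) (c*e+d*g) (c*f+d*h)"
  by (simp add: vec_eq_iff forall_2 matrix_matrix_mult_def sum_2)

lemma M2_mult_V2[simp]: "M2 a b c d *v V2 x y = V2 (a*x+b*y) (c*x+d*y)"
  by (simp add: vec_eq_iff forall_2 matrix_vector_mult_def sum_2)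

lemma mat1_M2: "(mat 1 :: mat2) = M2 1 0 0 1"
  by (simp add: vec_eq_iff forall_2 mat_def)

lemma M2_add[simp]: "M2 a b c d + M2 e f g h = M2 (a+e) (b+f) (c+g) (d+h)"
  by (simp add: vec_eq_iff forall_2)

lemma M2_diff[simp]: "M2 a b c d - M2 e f g h = M2 (a-e) (b-f) (c-g) (d-h)"
  by (simp add: vec_eq_iff forall_2)

lemma V2_add[simp]: "V2 a b + V2 c d = V2 (a+c) (b+d)"
  by (simp add: vec_eq_iff forall_2)

lemma V2_diff[simp]: "V2 a b - V2 c d = V2 (a-c) (b-d)"
  by (simp add: vec_eq_iff forall_2)

lemma V2_scale[simp]: "r *\<^sub>R V2 a b = V2 (r*a) (r*b)" "r *s V2 a b = V2 (r*a) (r*b)"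
  by (simp_all add: vec_eq_iff forall_2)

lemma V2_zero: "(0::real^2) = V2 0 0"
  by (simp add: vec_eq_iff forall_2)

lemma V2_eq_0_iff[simp]: "V2 a b = 0 \<longleftrightarrow> a = 0 \<and> b = 0"
  by (simp add: V2_zero V2_eq_iff)

lemma det_M2[simp]: "det (M2 a b c d) = a*d - b*c"
  by (simp add: det_2)

lemma norm_V2: "norm (V2 x y) = sqrt (x^2 + y^2)"
  by (simp add: norm_vec_def L2_set_def sum_2)

lemma inner_V2: "V2 a b \<bullet> V2 c d = a*c + b*d"
  by (simp add: inner_vec_def sum_2)

lemma matrix_inv_unique2:
  fixes M N :: mat2
  assumes "M ** N = mat 1" "N ** M = mat 1"
  shows "matrix_inv M = N" "invertible M"
proof -
  show inv: "invertible M" using assms unfolding invertible_def by blast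
  let ?P = "\<lambda>A'::mat2. M ** A' = mat 1 \<and> A' ** M = mat 1"
  have "?P (matrix_inv M)" unfolding matrix_inv_def by (rule someI[of ?P N]) (use assms in auto)
  hence "matrix_inv M = matrix_inv M ** (M ** N)" using assms by simp
  also have "\<dots> = (matrix_inv M ** M) ** N" by (simp add: matrix_mul_assoc)
  also have "\<dots> = N" using \<open>?P (matrix_inv M)\<close> by simp
  finally show "matrix_inv M = N" .
qed

lemma matrix_inv_M2:
  assumes D: "a*d - b*c \<noteq> 0"
  shows "matrix_inv (M2 a b c d) = M2 (d/(a*d-b*c)) (-b/(a*d-b*c)) (-c/(a*d-b*c)) (a/(a*d-b*c))"
    and "invertible (M2 a b c d)"
proof -
  define k where "k = a*d - b*c"
  have kk: "a*d - b*c = k" "k \<noteq> 0" using D k_def by auto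
  have e1: "a * (d / k) + b * (- c / k) = 1" "c * (- b / k) + d * (a / k) = 1"
           "d / k * a + - b / k * c = 1" "- c / k * b + a / k * d = 1"
   and e0: "a * (- b / k) + b * (a / k) = 0" "c * (d / k) + d * (- c / k) = 0"
           "d / k * b + - b / k * d = 0" "- c / k * a + a / k * c = 0"
    using kk by (simp_all add: field_simps)
  have 1: "M2 a b c d ** M2 (d/k) (-b/k) (-c/k) (a/k) = mat 1"
    unfolding M2_mult e0 e1 mat1_M2 by (rule refl)
  have 2: "M2 (d/k) (-b/k) (-c/k) (a/k) ** M2 a b c d = mat 1"
    unfolding M2_mult e0 e1 mat1_M2 by (rule refl)
  show "matrix_inv (M2 a b c d) = M2 (d/(a*d-b*c)) (-b/(a*d-b*c)) (-c/(a*d-b*c)) (a/(a*d-b*c))"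
       "invertible (M2 a b c d)"
    using matrix_inv_unique2[OF 1 2] by (auto simp: k_def)
qed

lemma invertible_iff_det: "invertible (M::mat2) \<longleftrightarrow> det M \<noteq> 0"
  by (simp add: invertible_det_nz)

lemma matrix_inv_left: "invertible (M::mat2) \<Longrightarrow> matrix_inv M ** M = mat 1"
  and matrix_inv_right: "invertible (M::mat2) \<Longrightarrow> M ** matrix_inv M = mat 1"
proof -
  assume "invertible M"
  then obtain N where "M ** N = mat 1" "N ** M = mat 1" unfolding invertible_def by blast
  with matrix_inv_unique2 show "matrix_inv M ** M = mat 1" "M ** matrix_inv M = mat 1" by auto
qed

lemma invertible_matrix_inv: "invertible (M::mat2) \<Longrightarrow> invertible (matrix_inv M)"
  using matrix_inv_left matrix_inv_right unfolding invertible_def by blast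

lemma matrix_inv_mult2:
  fixes A B :: mat2
  assumes "invertible A" "invertible B"
  shows "matrix_inv (A ** B) = matrix_inv B ** matrix_inv A"
proof -
  have "(A ** B) ** (matrix_inv B ** matrix_inv A) = mat 1"
    by (metis (no_types, lifting) assms matrix_inv_right matrix_mul_assoc matrix_mul_rid)
  moreover have "(matrix_inv B ** matrix_inv A) ** (A ** B) = mat 1"
    by (metis (no_types, lifting) assms matrix_inv_left matrix_mul_assoc matrix_mul_rid)
  ultimately show ?thesis using matrix_inv_unique2 by blast
qed

lemma matrix_inv_inv2: "invertible (M::mat2) \<Longrightarrow> matrix_inv (matrix_inv M) = M"
  using matrix_inv_unique2(1)[of "matrix_inv M" M] matrix_inv_left matrix_inv_right by blast

lemma invertible_mult2: "invertible (A::mat2) \<Longrightarrow> invertible (B::mat2) \<Longrightarrow> invertible (A ** B)"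
  unfolding invertible_iff_det det_mul by simp

lemma bl_mat: "bounded_linear (\<lambda>v. (M::mat2) *v v)"
  by (simp add: matrix_vector_mul_bounded_linear)

lemma opnorm_apply: "norm (M *v v) \<le> opnorm M * norm v"
  unfolding opnorm_def by (rule onorm[OF bl_mat])

lemma opnorm_nonneg: "0 \<le> opnorm M"
  unfolding opnorm_def by (rule onorm_pos_le[OF bl_mat])

lemma opnorm_mult: "opnorm (A ** B) \<le> opnorm A * opnorm B"
proof -
  have "(\<lambda>v. (A ** B) *v v) = (\<lambda>v. A *v v) \<circ> (\<lambda>v. B *v v)"
    by (simp add: o_def matrix_vector_mul_assoc)
  thus ?thesis unfolding opnorm_def using onorm_compose[OF bl_mat bl_mat] by simp
qed

lemma opnorm_M2: "opnorm (M2 a b c d) \<le> sqrt (a^2+b^2+c^2+d^2)"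
  unfolding opnorm_def
proof (rule onorm_le)
  fix v :: "real^2"
  obtain x y where v: "v = V2 x y" using V2_eta by blast
  have "(a*x+b*y)^2 + (c*x+d*y)^2 \<le> (a^2+b^2+c^2+d^2) * (x^2+y^2)"
  proof -
    have "(a*x+b*y)^2 \<le> (a^2+b^2)*(x^2+y^2)" proof -
      have "(a^2+b^2)*(x^2+y^2) - (a*x+b*y)^2 = (a*y - b*x)^2" by (simp add: power2_eq_square algebra_simps)
      thus ?thesis by (metis diff_ge_0_iff_ge zero_le_power2)
    qed
    moreover have "(c*x+d*y)^2 \<le> (c^2+d^2)*(x^2+y^2)" proof -
      have "(c^2+d^2)*(x^2+y^2) - (c*x+d*y)^2 = (c*y - d*x)^2" by (simp add: power2_eq_square algebra_simps)
      thus ?thesis by (metis diff_ge_0_iff_ge zero_le_power2)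
    qed
    ultimately show ?thesis by (simp add: algebra_simps)
  qed
  hence "sqrt ((a*x+b*y)^2 + (c*x+d*y)^2) \<le> sqrt ((a^2+b^2+c^2+d^2) * (x^2+y^2))"
    using real_sqrt_le_mono by blast
  thus "norm (M2 a b c d *v v) \<le> sqrt (a^2+b^2+c^2+d^2) * norm v"
    by (simp add: v norm_V2 real_sqrt_mult)
qed


definition tr2 :: "mat2 \<Rightarrow> real" where "tr2 M = M$1$1 + M$2$2"

lemma tr2_M2[simp]: "tr2 (M2 a b c d) = a + d" by (simp add: tr2_def)

lemma tr2_comm: "tr2 (A ** B) = tr2 (B ** A)"
  by (simp add: tr2_def matrix_matrix_mult_def sum_2 algebra_simps)

lemma cx_eig_char:
  "cx_eigenvalues M = {z. z^2 - complex_of_real (tr2 M) * z + complex_of_real (det M) = 0}"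
proof -
  have "det (mat z - (\<chi> i j. complex_of_real (M $ i $ j))) =
        z^2 - complex_of_real (tr2 M) * z + complex_of_real (det M)" for z
    by (simp add: det_2 tr2_def mat_def power2_eq_square algebra_simps)
  thus ?thesis unfolding cx_eigenvalues_def by simp
qed

lemma quad_fac:
  fixes a b z t d :: "'b::comm_ring_1"
  assumes "a + b = t" "a * b = d"
  shows "z^2 - t * z + d = (z - a) * (z - b)"
  using assms by (auto simp: power2_eq_square algebra_simps)

lemma cx_eig_complex:
  assumes "tr2 M ^ 2 < 4 * det M"
  defines "w \<equiv> sqrt (4 * det M - tr2 M ^ 2) / 2"
  shows "cx_eigenvalues M = {Complex (tr2 M / 2) w, Complex (tr2 M / 2) (- w)}"
    and "w > 0"
    and "cmod (Complex (tr2 M / 2) w) = sqrt (det M)"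
    and "cmod (Complex (tr2 M / 2) (- w)) = sqrt (det M)"
proof -
  let ?t = "tr2 M" and ?d = "det M"
  have w2: "w^2 = (4 * ?d - ?t^2)/4" unfolding w_def using assms(1)
    by (simp add: power_divide)
  show wpos: "w > 0" unfolding w_def using assms(1) by simp
  have fac: "z^2 - complex_of_real ?t * z + complex_of_real ?d =
      (z - Complex (?t/2) w) * (z - Complex (?t/2) (-w))" for z
  proof -
    have "Complex (?t/2) w + Complex (?t/2) (-w) = complex_of_real ?t"
      by (simp add: complex_eq_iff)
    moreover have "Complex (?t/2) w * Complex (?t/2) (-w) = complex_of_real ?d"
      using w2 by (simp add: complex_eq_iff power2_eq_square algebra_simps)
    ultimately show ?thesis
      by (intro quad_fac)
  qed
  show "cx_eigenvalues M = {Complex (tr2 M / 2) w, Complex (tr2 M / 2) (- w)}"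
    unfolding cx_eig_char fac by auto
  have "cmod (Complex (?t/2) w) = sqrt ((?t/2)^2 + w^2)" by (simp add: cmod_def)
  also have "(?t/2)^2 + w^2 = ?d" using w2 by (simp add: power_divide)
  finally show "cmod (Complex (tr2 M / 2) w) = sqrt (det M)" .
  have "cmod (Complex (?t/2) (-w)) = sqrt ((?t/2)^2 + w^2)" by (simp add: cmod_def)
  also have "(?t/2)^2 + w^2 = ?d" using w2 by (simp add: power_divide)
  finally show "cmod (Complex (tr2 M / 2) (-w)) = sqrt (det M)" .
qed

lemma cx_eig_real:
  assumes "4 * det M \<le> tr2 M ^ 2"
  defines "s \<equiv> sqrt (tr2 M ^ 2 - 4 * det M)"
  shows "cx_eigenvalues M = {complex_of_real ((tr2 M - s)/2), complex_of_real ((tr2 M + s)/2)}"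
proof -
  let ?t = "tr2 M" and ?d = "det M"
  have s2: "s^2 = ?t^2 - 4 * ?d" unfolding s_def using assms(1) by simp
  have fac: "z^2 - complex_of_real ?t * z + complex_of_real ?d =
      (z - complex_of_real ((?t - s)/2)) * (z - complex_of_real ((?t + s)/2))" for z
  proof -
    have "(?t - s)/2 * ((?t + s)/2) = ?d" using s2 by (simp add: power2_eq_square field_simps)
    hence "complex_of_real ((?t - s)/2) * complex_of_real ((?t + s)/2) = complex_of_real ?d"
      by (metis of_real_mult)
    moreover have "complex_of_real ((?t - s)/2) + complex_of_real ((?t + s)/2) = complex_of_real ?t"
    proof -
      have "(?t - s)/2 + (?t + s)/2 = ?t" by (simp add: field_simps)
      thus ?thesis by (simp only: of_real_add[symmetric])
    qed
    ultimately show ?thesis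
      by (intro quad_fac)
  qed
  show ?thesis unfolding cx_eig_char fac by auto
qed

definition Lm :: "real \<Rightarrow> real \<Rightarrow> real" where
  "Lm T D = (if 4 * D \<le> T^2 then (T - sqrt (T^2 - 4*D))/2 else sqrt D)"
definition Lb :: "real \<Rightarrow> real \<Rightarrow> real" where
  "Lb T D = (if 4 * D \<le> T^2 then (T + sqrt (T^2 - 4*D))/2 else sqrt D)"

lemma lam_formula:
  assumes D: "det M > 0" and T: "tr2 M \<ge> 0"
  shows "lam_m M = Lm (tr2 M) (det M)" "lam_b M = Lb (tr2 M) (det M)"
proof -
  let ?t = "tr2 M" and ?d = "det M"
  have "lam_m M = Lm ?t ?d \<and> lam_b M = Lb ?t ?d"
  proof (cases "4 * ?d \<le> ?t^2")
    case True
    define s where "s = sqrt (?t^2 - 4 * ?d)"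
    have s0: "0 \<le> s" unfolding s_def using True by simp
    have "s^2 < ?t^2" unfolding s_def using True D by simp
    hence "s < ?t" using T by (rule power_less_imp_less_base)
    hence p1: "0 \<le> (?t - s)/2" by simp
    have p2: "(?t - s)/2 \<le> (?t + s)/2" using s0 by simp
    have E: "cx_eigenvalues M = {complex_of_real ((?t - s)/2), complex_of_real ((?t + s)/2)}"
      using cx_eig_real[OF True] unfolding s_def by simp
    have c1: "cmod (complex_of_real ((?t - s)/2)) = (?t - s)/2"
      using p1 by (simp only: norm_of_real abs_of_nonneg)
    have c2: "cmod (complex_of_real ((?t + s)/2)) = (?t + s)/2"
      using p1 p2 by (simp only: norm_of_real abs_of_nonneg)
    have C: "cmod ` cx_eigenvalues M = {(?t - s)/2, (?t + s)/2}"
      unfolding E image_insert image_empty c1 c2 by (rule refl)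
    show ?thesis unfolding lam_m_def lam_b_def C Lm_def Lb_def using True p2 s_def
      by (simp add: min_def max_def)
  next
    case False
    hence F: "?t^2 < 4 * ?d" by simp
    define w where "w = sqrt (4 * ?d - ?t^2) / 2"
    note c = cx_eig_complex[OF F]
    have C: "cmod ` cx_eigenvalues M = {sqrt ?d}"
      unfolding c(1) using c(3,4) by auto
    show ?thesis unfolding lam_m_def lam_b_def C Lm_def Lb_def using False by simp
  qed
  thus "lam_m M = Lm (tr2 M) (det M)" "lam_b M = Lb (tr2 M) (det M)" by auto
qed

lemma Lm_antimono:
  assumes D: "D > 0" and "0 \<le> T1" "T1 \<le> T2"
  shows "Lm T2 D \<le> Lm T1 D" "Lb T1 D \<le> Lb T2 D"
proof -
  have sD: "sqrt D > 0" using D by simp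
  have key: "(T - sqrt (T^2 - 4*D))/2 \<le> sqrt D \<and> sqrt D \<le> (T + sqrt (T^2 - 4*D))/2"
    if "4 * D \<le> T^2" "0 \<le> T" for T
  proof -
    have "(2 * sqrt D)^2 \<le> T^2" using that D by (simp add: power_mult_distrib)
    hence T2: "2 * sqrt D \<le> T" using that(2) by (rule power2_le_imp_le)
    have s0: "0 \<le> sqrt (T^2 - 4*D)" using that by simp
    have "(T - 2 * sqrt D)^2 \<le> T^2 - 4*D"
    proof -
      have "T^2 - 4*D - (T - 2 * sqrt D)^2 = 4 * sqrt D * (T - 2 * sqrt D)"
        using D by (simp add: power2_eq_square algebra_simps)
      moreover have "4 * sqrt D * (T - 2 * sqrt D) \<ge> 0" using sD T2 by simp
      ultimately show ?thesis by linarith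
    qed
    hence "T - 2 * sqrt D \<le> sqrt (T^2 - 4*D)" using T2 by (simp add: real_le_rsqrt)
    thus ?thesis using s0 T2 by (auto simp: field_simps)
  qed
  have mono1: "T1 - sqrt (T1^2 - 4*D) \<ge> T2 - sqrt (T2^2 - 4*D) \<and>
               T1 + sqrt (T1^2 - 4*D) \<le> T2 + sqrt (T2^2 - 4*D)"
    if "4 * D \<le> T1^2" 
  proof -
    have "T1^2 \<le> T2^2" using assms(2,3) by (simp add: power_mono)
    hence sm: "sqrt (T1^2 - 4*D) \<le> sqrt (T2^2 - 4*D)" by simp
    have s1: "0 \<le> sqrt (T1^2 - 4*D)" using that by simp
    have s2: "0 \<le> sqrt (T2^2 - 4*D)" using that \<open>T1^2 \<le> T2^2\<close> by simp
    have "(T1 - sqrt (T1^2 - 4*D)) * (T1 + sqrt (T1^2 - 4*D)) = 4 * D"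
      using that by (simp add: algebra_simps power2_eq_square[symmetric])
    moreover have "(T2 - sqrt (T2^2 - 4*D)) * (T2 + sqrt (T2^2 - 4*D)) = 4 * D"
      using that \<open>T1^2 \<le> T2^2\<close> by (simp add: algebra_simps power2_eq_square[symmetric])
    moreover have "T1 + sqrt (T1^2 - 4*D) \<le> T2 + sqrt (T2^2 - 4*D)" using sm assms(3) by linarith
    moreover have "0 < T1 + sqrt (T1^2 - 4*D)" 
    proof -
      have "0 < T1^2" using that D by linarith
      hence "T1 \<noteq> 0" by auto
      thus ?thesis using assms(2) s1 by linarith
    qed
    ultimately show ?thesis
    proof -
      assume e1: "(T1 - sqrt (T1^2 - 4*D)) * (T1 + sqrt (T1^2 - 4*D)) = 4 * D"
        and e2: "(T2 - sqrt (T2^2 - 4*D)) * (T2 + sqrt (T2^2 - 4*D)) = 4 * D"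
        and le: "T1 + sqrt (T1^2 - 4*D) \<le> T2 + sqrt (T2^2 - 4*D)"
        and pos: "0 < T1 + sqrt (T1^2 - 4*D)"
      have pos2: "0 < T2 + sqrt (T2^2 - 4*D)" using le pos by linarith
      have a1: "T1 - sqrt (T1^2 - 4*D) = 4*D / (T1 + sqrt (T1^2 - 4*D))"
        using e1 pos by (simp add: field_simps)
      have a2: "T2 - sqrt (T2^2 - 4*D) = 4*D / (T2 + sqrt (T2^2 - 4*D))"
        using e2 pos2 by (simp add: field_simps)
      have "4*D / (T2 + sqrt (T2^2 - 4*D)) \<le> 4*D / (T1 + sqrt (T1^2 - 4*D))"
        using D pos le by (intro divide_left_mono) auto
      thus ?thesis using a1 a2 le by simp
    qed
  qed
  show "Lm T2 D \<le> Lm T1 D"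
  proof (cases "4 * D \<le> T1^2")
    case True
    moreover have "T1^2 \<le> T2^2" using assms(2,3) by (simp add: power_mono)
    ultimately have "4 * D \<le> T2^2" by linarith
    thus ?thesis using True mono1 unfolding Lm_def by simp
  next
    case False
    thus ?thesis unfolding Lm_def using key assms by auto
  qed
  show "Lb T1 D \<le> Lb T2 D"
  proof (cases "4 * D \<le> T1^2")
    case True
    moreover have "T1^2 \<le> T2^2" using assms(2,3) by (simp add: power_mono)
    ultimately have "4 * D \<le> T2^2" by linarith
    thus ?thesis using True mono1 unfolding Lb_def by simp
  next
    case False
    thus ?thesis unfolding Lb_def using key assms by auto
  qed
qed


lemma mat_sub_ldistrib: "(A::mat2) ** (B - C) = A ** B - A ** C"
  by (simp add: matrix_matrix_mult_def vec_eq_iff sum_2 algebra_simps)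

lemma mat_sub_rdistrib: "((B::mat2) - C) ** A = B ** A - C ** A"
  by (simp add: matrix_matrix_mult_def vec_eq_iff sum_2 algebra_simps)

lemma cocycle_pow_add:
  "cocycle_pow A f (a + b) x = cocycle_pow A f b ((f^^a) x) ** cocycle_pow A f a x"
proof (induction b)
  case 0 then show ?case by simp
next
  case (Suc b)
  have "(f ^^ (a + b)) x = (f ^^ b) ((f ^^ a) x)" by (subst add.commute) (simp add: funpow_add)
  with Suc show ?case by (simp add: matrix_mul_assoc)
qed

lemma cocycle_pow_Suc':
  "cocycle_pow A f (Suc n) x = cocycle_pow A f n (f x) ** A x"
  using cocycle_pow_add[of A f 1 n x] by simp

lemma cocycle_pow_invertible:
  assumes "\<And>x. invertible (A x)" shows "invertible (cocycle_pow A f n x)"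
proof (induction n)
  case 0 then show ?case by (simp add: invertible_iff_det)
next
  case (Suc n) then show ?case using assms by (simp add: invertible_mult2)
qed

fun iprod :: "(nat \<Rightarrow> mat2) \<Rightarrow> nat \<Rightarrow> mat2" where
  "iprod B 0 = mat 1"
| "iprod B (Suc m) = B m ** iprod B m"

lemma iprod_cong: "(\<And>k. k < n \<Longrightarrow> B k = C k) \<Longrightarrow> iprod B n = iprod C n"
  by (induction n) auto

lemma cocycle_pow_iprod: "cocycle_pow B f n x = iprod (\<lambda>k. B ((f^^k) x)) n"
  by (induction n) auto

lemma iprod_split: "iprod B (a + b) = iprod (\<lambda>k. B (a + k)) b ** iprod B a"
  by (induction b) (auto simp: matrix_mul_assoc)

locale porb =
  fixes f :: "'a \<Rightarrow> 'a" and X :: 'a and p :: nat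
  assumes inj_f: "inj f" and p_pos: "0 < p" and p_ret: "(f^^p) X = X"
    and p_min: "\<And>q. 0 < q \<Longrightarrow> q < p \<Longrightarrow> (f^^q) X \<noteq> X"
begin

lemma period_eq: "period f X = p"
  unfolding period_def
proof (rule Least_equality)
  show "0 < p \<and> (f ^^ p) X = X" using p_pos p_ret by simp
  fix q assume "0 < q \<and> (f ^^ q) X = X"
  thus "p \<le> q" using p_min by (meson not_le)
qed

lemma funpow_mult_p: "(f^^(q*p)) X = X"
proof (induction q)
  case 0 then show ?case by simp
next
  case (Suc q)
  have "(f^^(Suc q * p)) X = (f^^p) ((f^^(q*p)) X)" by (simp add: funpow_add)
  thus ?case using Suc p_ret by simp
qed

lemma funpow_mod: "(f^^k) X = (f^^(k mod p)) X"
proof -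
  have "k = k mod p + (k div p) * p" by simp
  hence "(f^^k) X = (f^^(k mod p)) ((f^^((k div p) * p)) X)"
    by (metis funpow_add o_apply)
  thus ?thesis using funpow_mult_p by simp
qed

lemma inj_orb: "inj_on (\<lambda>k. (f^^k) X) {..<p}"
proof (rule inj_onI)
  have gen: "i = j" if "i < p" "j < p" "i \<le> j" "(f^^i) X = (f^^j) X" for i j
  proof (rule ccontr)
    assume "i \<noteq> j"
    hence ij: "0 < j - i" "j - i < p" using that by auto
    have "(f^^j) X = (f^^i) ((f^^(j-i)) X)" using that(3)
      by (metis funpow_add le_add_diff_inverse o_apply)
    hence "(f^^i) ((f^^(j-i)) X) = (f^^i) X" using that(4) by simp
    hence "(f^^(j-i)) X = X" using inj_fn[OF inj_f, of i] by (simp add: inj_eq)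
    thus False using p_min ij by blast
  qed
  fix i j assume "i \<in> {..<p}" "j \<in> {..<p}" "(f^^i) X = (f^^j) X"
  thus "i = j" using gen[of i j] gen[of j i] by (cases "i \<le> j") auto
qed

lemma orbit_eq: "orbit f X = (\<lambda>k. (f^^k) X) ` {..<p}"
proof
  show "orbit f X \<subseteq> (\<lambda>k. (f^^k) X) ` {..<p}"
    unfolding orbit_def
  proof clarify
    fix k show "(f ^^ k) X \<in> (\<lambda>k. (f ^^ k) X) ` {..<p}"
      using funpow_mod[of k] p_pos by (intro image_eqI[of _ _ "k mod p"]) auto
  qed
  show "(\<lambda>k. (f^^k) X) ` {..<p} \<subseteq> orbit f X" unfolding orbit_def by auto
qed

lemma finite_orbit: "finite (orbit f X)" by (simp add: orbit_eq)

lemma orbit_ne: "orbit f X \<noteq> {}" by (simp add: orbit_def)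

definition idx :: "'a \<Rightarrow> nat" where "idx x = (LEAST k. (f^^k) X = x)"

lemma idx_pt: "k < p \<Longrightarrow> idx ((f^^k) X) = k"
  unfolding idx_def
proof (rule Least_equality)
  fix j assume "k < p" "(f^^j) X = (f^^k) X"
  hence "(f^^(j mod p)) X = (f^^k) X" using funpow_mod by simp
  hence "j mod p = k" using inj_orb \<open>k < p\<close> p_pos by (auto dest: inj_onD)
  thus "k \<le> j" by (metis mod_less_eq_dividend)
qed simp

lemma idx_orbit: "x \<in> orbit f X \<Longrightarrow> idx x < p \<and> (f^^(idx x)) X = x"
  using idx_pt orbit_eq by auto

lemma rot_path:
  fixes A :: "'a \<Rightarrow> mat2" and E :: "nat \<Rightarrow> real \<Rightarrow> mat2" and K0 L \<epsilon> :: real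
  assumes Ainv: "\<And>x. invertible (A x)"
   and Ab: "\<And>x. opnorm (A x) \<le> K0" "\<And>x. opnorm (matrix_inv (A x)) \<le> K0"
   and E0: "\<And>k. k < p \<Longrightarrow> E k 0 = mat 1"
   and Einv: "\<And>k t. k < p \<Longrightarrow> invertible (E k t)"
   and EL: "\<And>k s t. k < p \<Longrightarrow> s \<in> {0..1} \<Longrightarrow> t \<in> {0..1} \<Longrightarrow>
              opnorm (E k s - E k t) \<le> L * \<bar>s - t\<bar>"
   and EL': "\<And>k s t. k < p \<Longrightarrow> s \<in> {0..1} \<Longrightarrow> t \<in> {0..1} \<Longrightarrow>
              opnorm (matrix_inv (E k s) - matrix_inv (E k t)) \<le> L * \<bar>s - t\<bar>"
   and L0: "0 \<le> L" and small: "K0 * L < \<epsilon>"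
  defines "\<gamma> \<equiv> \<lambda>t x. if x \<in> orbit f X then A x ** E (idx x) t else A x"
  shows "C_path f X \<gamma>" "\<forall>x\<in>orbit f X. \<gamma> 0 x = A x" "C_diam f X \<gamma> < \<epsilon>"
        "\<And>t. return_map f (\<gamma> t) X = iprod (\<lambda>k. A ((f^^k) X) ** E k t) p"
proof -
  have K0: "0 \<le> K0" using Ab(1) opnorm_nonneg order_trans by blast
  have cd: "cdist f X (\<gamma> s) (\<gamma> t) \<le> K0 * L * \<bar>s - t\<bar>" if st: "s \<in> {0..1}" "t \<in> {0..1}" for s t
  proof -
    have b1: "opnorm (\<gamma> s x - \<gamma> t x) \<le> K0 * L * \<bar>s - t\<bar>" if x: "x \<in> orbit f X" for x
    proof -
      have k: "idx x < p" using idx_orbit x by blast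
      have "\<gamma> s x - \<gamma> t x = A x ** (E (idx x) s - E (idx x) t)"
        using x by (simp add: \<gamma>_def mat_sub_ldistrib)
      hence "opnorm (\<gamma> s x - \<gamma> t x) \<le> opnorm (A x) * opnorm (E (idx x) s - E (idx x) t)"
        using opnorm_mult by simp
      also have "\<dots> \<le> K0 * (L * \<bar>s - t\<bar>)"
        using Ab(1) EL[OF k st] opnorm_nonneg K0 by (intro mult_mono) auto
      finally show ?thesis by (simp add: mult.assoc)
    qed
    have b2: "opnorm (matrix_inv (\<gamma> s x) - matrix_inv (\<gamma> t x)) \<le> K0 * L * \<bar>s - t\<bar>"
      if x: "x \<in> orbit f X" for x
    proof -
      have k: "idx x < p" using idx_orbit x by blast
      have "matrix_inv (\<gamma> s x) - matrix_inv (\<gamma> t x) =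
            (matrix_inv (E (idx x) s) - matrix_inv (E (idx x) t)) ** matrix_inv (A x)"
        using x by (simp add: \<gamma>_def mat_sub_rdistrib matrix_inv_mult2 Ainv Einv k)
      hence "opnorm (matrix_inv (\<gamma> s x) - matrix_inv (\<gamma> t x)) \<le>
             opnorm (matrix_inv (E (idx x) s) - matrix_inv (E (idx x) t)) * opnorm (matrix_inv (A x))"
        using opnorm_mult by simp
      also have "\<dots> \<le> (L * \<bar>s - t\<bar>) * K0"
        using Ab(2) EL'[OF k st] opnorm_nonneg L0 by (intro mult_mono) auto
      finally show ?thesis by (simp add: algebra_simps)
    qed
    show ?thesis unfolding cdist_def using b1 b2 finite_orbit orbit_ne by simp
  qed
  show "C_path f X \<gamma>"
    unfolding C_path_def
  proof (intro conjI ballI allI impI)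
    fix t :: real assume "t \<in> {0..1}"
    show "in_C f X (\<gamma> t)" unfolding in_C_def
      using idx_orbit Ainv Einv by (auto simp: \<gamma>_def invertible_mult2)
  next
    fix t e :: real assume t: "t \<in> {0..1}" and e: "0 < e"
    define d where "d = e / (K0 * L + 1)"
    have pos: "0 < K0 * L + 1" using K0 L0 by (simp add: add_nonneg_pos)
    hence d: "0 < d" using e by (simp add: d_def)
    show "\<exists>d>0. \<forall>s\<in>{0..1}. \<bar>s - t\<bar> < d \<longrightarrow> cdist f X (\<gamma> s) (\<gamma> t) < e"
    proof (intro exI conjI ballI impI)
      show "0 < d" by (rule d)
      fix s :: real assume s: "s \<in> {0..1}" and sd: "\<bar>s - t\<bar> < d"
      have "cdist f X (\<gamma> s) (\<gamma> t) \<le> K0 * L * \<bar>s - t\<bar>" using cd s t by blast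
      also have "\<dots> \<le> K0 * L * d" using sd K0 L0 by (intro mult_left_mono) auto
      also have "\<dots> < (K0 * L + 1) * d" using d by (simp add: algebra_simps)
      also have "\<dots> = e" using pos by (simp add: d_def)
      finally show "cdist f X (\<gamma> s) (\<gamma> t) < e" .
    qed
  qed
  show "\<forall>x\<in>orbit f X. \<gamma> 0 x = A x"
    using idx_orbit E0 by (simp add: \<gamma>_def)
  have "C_diam f X \<gamma> \<le> K0 * L"
    unfolding C_diam_def
  proof (rule cSup_least)
    show "{cdist f X (\<gamma> s) (\<gamma> t) |s t. s \<in> {0..1} \<and> t \<in> {0..1}} \<noteq> {}" by force
    fix z assume "z \<in> {cdist f X (\<gamma> s) (\<gamma> t) |s t. s \<in> {0..1} \<and> t \<in> {0..1}}"
    then obtain s t where st: "s \<in> {0..1}" "t \<in> {0..1}" and z: "z = cdist f X (\<gamma> s) (\<gamma> t)" by blast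
    have "\<bar>s - t\<bar> \<le> 1" using st by auto
    hence "K0 * L * \<bar>s - t\<bar> \<le> K0 * L * 1" using K0 L0 by (intro mult_left_mono) auto
    thus "z \<le> K0 * L" using cd[OF st] z by simp
  qed
  thus "C_diam f X \<gamma> < \<epsilon>" using small by simp
  fix t
  show "return_map f (\<gamma> t) X = iprod (\<lambda>k. A ((f^^k) X) ** E k t) p"
    unfolding return_map_def period_eq cocycle_pow_iprod
    by (rule iprod_cong) (auto simp: \<gamma>_def idx_pt orbit_def)
qed

end

lemma porb_of_periodic:
  assumes "inj f" "\<exists>q>0. (f^^q) y = y"
  shows "porb f y (period f y)"
proof -
  have L: "0 < period f y \<and> (f^^period f y) y = y"
    unfolding period_def by (rule LeastI_ex) (use assms(2) in auto)
  show ?thesis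
  proof
    show "inj f" "0 < period f y" "(f^^period f y) y = y" using assms L by auto
    fix q assume "0 < q" "q < period f y"
    thus "(f ^^ q) y \<noteq> y" unfolding period_def using not_less_Least by blast
  qed
qed


definition rot :: "real \<Rightarrow> mat2" where "rot a = M2 (cos a) (- sin a) (sin a) (cos a)"

lemma rot_add: "rot a ** rot b = rot (a + b)"
  by (simp add: rot_def cos_add sin_add M2_eq_iff algebra_simps)

lemma rot_0: "rot 0 = mat 1" by (simp add: rot_def mat1_M2)

lemma det_rot: "det (rot a) = 1"
  by (simp add: rot_def power2_eq_square[symmetric])

lemma rot_inv: "matrix_inv (rot a) = rot (- a)"
  using matrix_inv_unique2(1)[of "rot a" "rot (-a)"] rot_add[of a "-a"] rot_add[of "-a" a]
  by (simp add: rot_0)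

lemma invertible_rot: "invertible (rot a)" by (simp add: invertible_iff_det det_rot)

lemma abs_sin_diff: "\<bar>sin (a::real) - sin b\<bar> \<le> \<bar>a - b\<bar>"
proof -
  have "\<bar>sin a - sin b\<bar> = 2 * \<bar>sin ((a - b) / 2)\<bar> * \<bar>cos ((a + b) / 2)\<bar>"
    by (simp add: sin_diff_sin abs_mult)
  also have "\<dots> \<le> 2 * \<bar>(a - b) / 2\<bar> * 1"
    by (intro mult_mono abs_sin_x_le_abs_x) auto
  finally show ?thesis by simp
qed

lemma abs_cos_diff: "\<bar>cos (a::real) - cos b\<bar> \<le> \<bar>a - b\<bar>"
proof -
  have "\<bar>cos a - cos b\<bar> = 2 * \<bar>sin ((a + b) / 2)\<bar> * \<bar>sin ((b - a) / 2)\<bar>"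
    by (simp add: cos_diff_cos abs_mult)
  also have "\<dots> \<le> 2 * 1 * \<bar>(b - a) / 2\<bar>"
    by (intro mult_mono abs_sin_x_le_abs_x) auto
  finally show ?thesis by simp
qed

lemma opnorm_rot_diff: "opnorm (rot a - rot b) \<le> 2 * \<bar>a - b\<bar>"
proof -
  have "opnorm (rot a - rot b) \<le> sqrt ((cos a - cos b)^2 + (sin b - sin a)^2 + (sin a - sin b)^2 + (cos a - cos b)^2)"
  proof -
    have "rot a - rot b = M2 (cos a - cos b) (sin b - sin a) (sin a - sin b) (cos a - cos b)"
      by (simp add: rot_def)
    thus ?thesis using opnorm_M2[of "cos a - cos b" "sin b - sin a" "sin a - sin b" "cos a - cos b"] by simp
  qed
  also have "\<dots> \<le> sqrt ((2 * \<bar>a - b\<bar>)^2)"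
  proof (rule real_sqrt_le_mono)
    have "(cos a - cos b)^2 \<le> (a - b)^2" using abs_cos_diff[of a b] by (simp add: abs_le_square_iff)
    moreover have "(sin a - sin b)^2 \<le> (a - b)^2" using abs_sin_diff[of a b] by (simp add: abs_le_square_iff)
    moreover have "(sin b - sin a)^2 = (sin a - sin b)^2" by (simp add: power2_commute)
    ultimately show "(cos a - cos b)^2 + (sin b - sin a)^2 + (sin a - sin b)^2 + (cos a - cos b)^2 \<le> (2 * \<bar>a - b\<bar>)^2"
      by (simp add: power_mult_distrib)
  qed
  also have "\<dots> = 2 * \<bar>a - b\<bar>" by (simp only: real_sqrt_abs) simp
  finally show ?thesis .
qed

lemma kap_bound:
  assumes "det Q \<noteq> 0"
  shows "opnorm Q * opnorm (matrix_inv Q) \<le> (Q$1$1^2 + Q$1$2^2 + Q$2$1^2 + Q$2$2^2) / \<bar>det Q\<bar>"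
proof -
  obtain a b c d where Q: "Q = M2 a b c d" using M2_eta by blast
  have D: "a*d - b*c \<noteq> 0" using assms Q by simp
  let ?F = "a^2 + b^2 + c^2 + d^2" and ?D = "a*d - b*c"
  have F0: "0 \<le> ?F" by simp
  have i: "opnorm (matrix_inv Q) \<le> sqrt ((d/?D)^2 + (-b/?D)^2 + (-c/?D)^2 + (a/?D)^2)"
    unfolding Q matrix_inv_M2[OF D] by (rule opnorm_M2)
  have "(d/?D)^2 + (-b/?D)^2 + (-c/?D)^2 + (a/?D)^2 = ?F / ?D^2"
    by (simp add: power_divide add_divide_distrib[symmetric] algebra_simps)
  hence i2: "opnorm (matrix_inv Q) \<le> sqrt ?F / \<bar>?D\<bar>" using i by (simp add: real_sqrt_divide)
  have q: "opnorm Q \<le> sqrt ?F" unfolding Q by (rule opnorm_M2)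
  have "opnorm Q * opnorm (matrix_inv Q) \<le> sqrt ?F * (sqrt ?F / \<bar>?D\<bar>)"
    using q i2 opnorm_nonneg by (intro mult_mono) auto
  also have "\<dots> = ?F / \<bar>?D\<bar>" using F0 by (simp add: real_sqrt_mult[symmetric])
  finally show ?thesis using Q by simp
qed

definition cq :: "mat2 \<Rightarrow> real \<Rightarrow> mat2" where "cq Q a = Q ** rot a ** matrix_inv Q"

lemma cq_0: "invertible Q \<Longrightarrow> cq Q 0 = mat 1"
  by (simp add: cq_def rot_0 matrix_inv_right)

lemma cq_inv: "invertible Q \<Longrightarrow> matrix_inv (cq Q a) = cq Q (- a)"
proof -
  assume Q: "invertible Q"
  have "cq Q a ** cq Q (-a) = mat 1"
    unfolding cq_def
    by (metis (no_types, lifting) Q matrix_inv_left matrix_inv_right matrix_mul_assoc matrix_mul_rid rot_add add.right_inverse rot_0)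
  moreover have "cq Q (-a) ** cq Q a = mat 1"
    unfolding cq_def
    by (metis (no_types, lifting) Q matrix_inv_left matrix_inv_right matrix_mul_assoc matrix_mul_rid rot_add add.left_inverse rot_0)
  ultimately show ?thesis using matrix_inv_unique2(1) by blast
qed

lemma invertible_cq: "invertible Q \<Longrightarrow> invertible (cq Q a)"
  by (simp add: cq_def invertible_mult2 invertible_rot invertible_matrix_inv)

lemma opnorm_cq_diff:
  assumes "opnorm Q * opnorm (matrix_inv Q) \<le> \<kappa>"
  shows "opnorm (cq Q a - cq Q b) \<le> 2 * \<kappa> * \<bar>a - b\<bar>"
proof -
  have "cq Q a - cq Q b = Q ** (rot a - rot b) ** matrix_inv Q"
    by (simp add: cq_def mat_sub_ldistrib mat_sub_rdistrib matrix_mul_assoc)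
  hence "opnorm (cq Q a - cq Q b) \<le> opnorm Q * opnorm (rot a - rot b) * opnorm (matrix_inv Q)"
    by (metis (no_types, lifting) opnorm_mult opnorm_nonneg mult_right_mono order_trans)
  also have "\<dots> = (opnorm Q * opnorm (matrix_inv Q)) * opnorm (rot a - rot b)" by simp
  also have "\<dots> \<le> \<kappa> * (2 * \<bar>a - b\<bar>)"
    using assms opnorm_rot_diff opnorm_nonneg order_trans[OF mult_nonneg_nonneg[OF opnorm_nonneg opnorm_nonneg] assms]
    by (intro mult_mono) (auto intro: mult_nonneg_nonneg order_trans)
  finally show ?thesis by simp
qed

lemma tr2_rot: "tr2 (N ** rot a) = (N$1$1 + N$2$2) * cos a - (N$2$1 - N$1$2) * sin a"
  apply (subst M2_eta[of N]) by (simp add: rot_def algebra_simps)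


definition good :: "('a \<Rightarrow> 'a) \<Rightarrow> ('a \<Rightarrow> mat2) \<Rightarrow> real \<Rightarrow> 'a \<Rightarrow> (real \<Rightarrow> 'a \<Rightarrow> mat2) \<Rightarrow> bool" where
  "good f A \<epsilon> X \<gamma> \<longleftrightarrow> C_path f X \<gamma>
           \<and> (\<forall>x\<in>orbit f X. \<gamma> 0 x = A x)
           \<and> C_diam f X \<gamma> < \<epsilon>
           \<and> (\<forall>s\<in>{0..1}. \<forall>t\<in>{0..1}. det (return_map f (\<gamma> s) X) = det (return_map f (\<gamma> t) X))
           \<and> (\<forall>s\<in>{0..1}. \<forall>t\<in>{0..1}. s < t \<longrightarrow>
                 lam_m (return_map f (\<gamma> s) X) \<le> lam_m (return_map f (\<gamma> t) X)
               \<and> lam_b (return_map f (\<gamma> s) X) \<ge> lam_b (return_map f (\<gamma> t) X))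
           \<and> (\<exists>z w. z \<in> cx_eigenvalues (return_map f (\<gamma> 1) X) \<and> w \<in> cx_eigenvalues (return_map f (\<gamma> 1) X)
                 \<and> z \<noteq> w \<and> Im z \<noteq> 0 \<and> Im w \<noteq> 0)"

lemma finish:
  assumes base: "C_path f X \<gamma>" "\<forall>x\<in>orbit f X. \<gamma> 0 x = A x" "C_diam f X \<gamma> < \<epsilon>"
   and D: "D > 0" and det: "\<And>t. t\<in>{0..1} \<Longrightarrow> det (return_map f (\<gamma> t) X) = D"
   and tr: "\<And>t. t\<in>{0..1} \<Longrightarrow> tr2 (return_map f (\<gamma> t) X) = T t"
   and anti: "\<And>s t. s\<in>{0..1} \<Longrightarrow> t\<in>{0..1} \<Longrightarrow> s \<le> t \<Longrightarrow> T t \<le> T s"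
   and T1: "0 \<le> T 1" "T 1 < 2 * sqrt D"
  shows "good f A \<epsilon> X \<gamma>"
proof -
  have Tnn: "0 \<le> T t" if "t \<in> {0..1}" for t using anti[OF that, of 1] that T1 by auto
  have mono: "lam_m (return_map f (\<gamma> s) X) \<le> lam_m (return_map f (\<gamma> t) X)
             \<and> lam_b (return_map f (\<gamma> s) X) \<ge> lam_b (return_map f (\<gamma> t) X)"
    if st: "s \<in> {0..1}" "t \<in> {0..1}" "s < t" for s t
  proof -
    have fs: "lam_m (return_map f (\<gamma> s) X) = Lm (T s) D" "lam_b (return_map f (\<gamma> s) X) = Lb (T s) D"
      using lam_formula[of "return_map f (\<gamma> s) X"] det[OF st(1)] tr[OF st(1)] D Tnn[OF st(1)] by auto
    have ft: "lam_m (return_map f (\<gamma> t) X) = Lm (T t) D" "lam_b (return_map f (\<gamma> t) X) = Lb (T t) D"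
      using lam_formula[of "return_map f (\<gamma> t) X"] det[OF st(2)] tr[OF st(2)] D Tnn[OF st(2)] by auto
    have "T t \<le> T s" using anti st by auto
    thus ?thesis unfolding fs ft using Lm_antimono[OF D Tnn[OF st(2)]] by auto
  qed
  have one: "(1::real) \<in> {0..1}" by simp
  let ?R = "return_map f (\<gamma> 1) X"
  have "(T 1)^2 < (2 * sqrt D)^2" using T1 by (intro power_strict_mono) auto
  hence lt: "tr2 ?R ^ 2 < 4 * det ?R" using D tr[OF one] det[OF one] by (simp add: power_mult_distrib)
  note c = cx_eig_complex[OF lt]
  have cplx: "\<exists>z w. z \<in> cx_eigenvalues ?R \<and> w \<in> cx_eigenvalues ?R \<and> z \<noteq> w \<and> Im z \<noteq> 0 \<and> Im w \<noteq> 0"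
    using c(1,2) by (intro exI[of _ "Complex (tr2 ?R / 2) (sqrt (4 * det ?R - tr2 ?R ^ 2) / 2)"]
          exI[of _ "Complex (tr2 ?R / 2) (- (sqrt (4 * det ?R - tr2 ?R ^ 2) / 2))"]) auto
  show ?thesis unfolding good_def using base det mono cplx by auto
qed

lemma inv_cancel: "invertible (P::mat2) \<Longrightarrow> matrix_inv P ** (P ** Z) = Z"
  by (simp add: matrix_mul_assoc matrix_inv_left)

lemma inv_cancel': "invertible (P::mat2) \<Longrightarrow> P ** (matrix_inv P ** Z) = Z"
  by (simp add: matrix_mul_assoc matrix_inv_right)

lemma invertible_mat1: "invertible (mat 1 :: mat2)" by (simp add: invertible_iff_det)

lemma opnorm_zero: "opnorm (0::mat2) = 0"
proof -
  have "opnorm (0::mat2) \<le> 0"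
  proof -
    have "(0::mat2) = M2 0 0 0 0" by (simp add: vec_eq_iff forall_2 M2_def)
    thus ?thesis using opnorm_M2[of 0 0 0 0] by simp
  qed
  thus ?thesis using opnorm_nonneg[of 0] by linarith
qed

lemma det_conj: "invertible (Q::mat2) \<Longrightarrow> det (M ** Q ** R ** matrix_inv Q) = det M * det R"
proof -
  assume Q: "invertible Q"
  have "det Q * det (matrix_inv Q) = 1" using matrix_inv_right[OF Q] det_mul[of Q "matrix_inv Q"] by simp
  thus ?thesis by (simp add: det_mul)
qed

lemma tr2_conj: "tr2 (M ** Q ** R ** matrix_inv Q) = tr2 (matrix_inv Q ** M ** Q ** R)"
  using tr2_comm[of "M ** Q ** R" "matrix_inv Q"] by (simp add: matrix_mul_assoc)

context porb
begin

lemma iprodG: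
  fixes A :: "'a \<Rightarrow> mat2" and Q :: mat2 and \<psi> :: real
  assumes Ainv: "\<And>x. invertible (A x)" and Q: "invertible Q" and n: "n \<le> p"
  defines "E \<equiv> \<lambda>k t. if k < n then cq (cocycle_pow A f k X ** Q) (t * \<psi>) else mat 1"
  shows "m \<le> p \<Longrightarrow> iprod (\<lambda>k. A ((f^^k) X) ** E k t) m
           = cocycle_pow A f m X ** Q ** rot (real (min m n) * (t * \<psi>)) ** matrix_inv Q"
proof (induction m)
  case 0 then show ?case by (simp add: rot_0 Q matrix_inv_right matrix_mul_assoc)
next
  case (Suc m)
  let ?C = "cocycle_pow A f m X"
  have Cinv: "invertible ?C" by (rule cocycle_pow_invertible[OF Ainv])
  have IH: "iprod (\<lambda>k. A ((f^^k) X) ** E k t) m = ?C ** Q ** rot (real (min m n) * (t * \<psi>)) ** matrix_inv Q"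
    using Suc by simp
  show ?case
  proof (cases "m < n")
    case True
    have CQ: "invertible (?C ** Q)" using Cinv Q by (simp add: invertible_mult2)
    have "iprod (\<lambda>k. A ((f^^k) X) ** E k t) (Suc m) =
          A ((f^^m) X) ** ((?C ** Q) ** rot (t * \<psi>) ** matrix_inv (?C ** Q)) **
          (?C ** Q ** rot (real m * (t * \<psi>)) ** matrix_inv Q)"
      using IH True by (simp add: E_def cq_def)
    also have "\<dots> = A ((f^^m) X) ** ?C ** Q ** (rot (t * \<psi>) ** rot (real m * (t * \<psi>))) ** matrix_inv Q"
    proof -
      have c: "\<And>Z. matrix_inv (?C ** Q) ** (?C ** (Q ** Z)) = Z"
        using inv_cancel[OF CQ] by (simp only: matrix_mul_assoc[symmetric])
      show ?thesis by (simp only: matrix_mul_assoc[symmetric] c)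
    qed
    also have "\<dots> = cocycle_pow A f (Suc m) X ** Q ** rot (real (min (Suc m) n) * (t * \<psi>)) ** matrix_inv Q"
      using True by (simp add: rot_add matrix_mul_assoc algebra_simps)
    finally show ?thesis .
  next
    case False
    hence "min m n = n" "min (Suc m) n = n" by auto
    thus ?thesis using IH False by (simp add: E_def matrix_mul_assoc)
  qed
qed

lemma mechG:
  fixes A :: "'a \<Rightarrow> mat2" and Q :: mat2 and n :: nat and \<Phi> K0 \<kappa> \<epsilon> :: real
  assumes Ainv: "\<And>x. invertible (A x)"
   and Ab: "\<And>x. opnorm (A x) \<le> K0" "\<And>x. opnorm (matrix_inv (A x)) \<le> K0"
   and n: "1 \<le> n" "n \<le> p" and Q: "invertible Q"
   and kap: "\<And>k. k < n \<Longrightarrow> opnorm (cocycle_pow A f k X ** Q) * opnorm (matrix_inv (cocycle_pow A f k X ** Q)) \<le> \<kappa>"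
   and \<Phi>: "0 < \<Phi>" "\<Phi> \<le> pi/2"
   and small: "K0 * (2 * \<kappa> * (\<Phi> / real n)) < \<epsilon>"
   and trpos: "0 < tr2 (cocycle_pow A f p X)" and detpos: "0 < det (cocycle_pow A f p X)"
   and b: "(matrix_inv Q ** cocycle_pow A f p X ** Q)$1$2 \<le> (matrix_inv Q ** cocycle_pow A f p X ** Q)$2$1"
   and cond: "tr2 (cocycle_pow A f p X) * cos \<Phi> - ((matrix_inv Q ** cocycle_pow A f p X ** Q)$2$1 - (matrix_inv Q ** cocycle_pow A f p X ** Q)$1$2) * sin \<Phi>
               < 2 * sqrt (det (cocycle_pow A f p X))"
  shows "\<exists>\<gamma>. good f A \<epsilon> X \<gamma>"
proof -
  define M where "M = cocycle_pow A f p X"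
  define N where "N = matrix_inv Q ** M ** Q"
  define a where "a = tr2 M"
  define bb where "bb = N$2$1 - N$1$2"
  have a0: "0 < a" using trpos by (simp add: a_def M_def)
  have b0: "0 \<le> bb" using b by (simp add: bb_def N_def M_def)
  have trN: "N$1$1 + N$2$2 = a"
  proof -
    have "tr2 N = tr2 (Q ** (matrix_inv Q ** M))" unfolding N_def by (rule tr2_comm)
    also have "\<dots> = tr2 M" by (simp add: inv_cancel'[OF Q])
    finally show ?thesis by (simp add: tr2_def a_def)
  qed
  define D where "D = det M"
  have D0: "0 < D" using detpos by (simp add: D_def M_def)
  define T where "T = (\<lambda>\<phi>. a * cos \<phi> - bb * sin \<phi>)"
  have Tanti: "T y \<le> T x" if "0 \<le> x" "x \<le> y" "y \<le> pi/2" for x y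
  proof -
    have "cos y \<le> cos x" using that by (intro cos_monotone_0_pi_le) auto
    moreover have "sin x \<le> sin y" using that by (intro sin_monotone_2pi_le) auto
    ultimately show ?thesis unfolding T_def using a0 b0
      by (smt (verit) mult_left_mono)
  qed
  define \<phi>e where "\<phi>e = (if 0 \<le> T \<Phi> then \<Phi> else arctan (a / bb))"
  have condT: "T \<Phi> < 2 * sqrt D" using cond
    by (simp add: T_def a_def bb_def N_def M_def D_def)
  have \<phi>e_all: "0 \<le> \<phi>e \<and> \<phi>e \<le> \<Phi> \<and> 0 \<le> T \<phi>e \<and> T \<phi>e < 2 * sqrt D"
  proof (cases "0 \<le> T \<Phi>")
    case True
    thus ?thesis using \<Phi> condT by (simp add: \<phi>e_def)
  next
    case False
    have c0: "0 \<le> cos \<Phi>" using \<Phi> by (intro cos_ge_zero) auto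
    have "0 < bb"
    proof (rule ccontr)
      assume "\<not> 0 < bb" hence "bb = 0" using b0 by simp
      thus False using False c0 a0 by (simp add: T_def)
    qed
    define x where "x = a / bb"
    have x0: "0 < x" using a0 \<open>0 < bb\<close> by (simp add: x_def)
    have ae: "\<phi>e = arctan x" using False by (simp add: \<phi>e_def x_def)
    have sq: "0 < sqrt (1 + x^2)" by (simp add: add_pos_nonneg)
    have Tz: "T (arctan x) = 0"
      unfolding T_def cos_arctan sin_arctan using \<open>0 < bb\<close> sq by (simp add: x_def field_simps)
    have pos: "0 \<le> arctan x" using x0 by simp
    have lt: "arctan x < pi/2" by (rule arctan_ubound)
    have "arctan x \<le> \<Phi>"
    proof (rule ccontr)
      assume "\<not> arctan x \<le> \<Phi>"
      hence "T (arctan x) \<le> T \<Phi>" using \<Phi> lt by (intro Tanti) auto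
      thus False using Tz False by simp
    qed
    thus ?thesis using ae pos Tz D0 by simp
  qed
  hence \<phi>e: "0 \<le> \<phi>e" "\<phi>e \<le> \<Phi>" "0 \<le> T \<phi>e" "T \<phi>e < 2 * sqrt D" by auto
  define \<psi> where "\<psi> = \<phi>e / real n"
  have \<psi>0: "0 \<le> \<psi>" using \<phi>e n by (simp add: \<psi>_def)
  have \<psi>le: "\<psi> \<le> \<Phi> / real n" using \<phi>e n by (simp add: \<psi>_def divide_right_mono)
  define E where "E = (\<lambda>k t. if k < n then cq (cocycle_pow A f k X ** Q) (t * \<psi>) else mat 1)"
  have K0: "0 \<le> K0" by (rule order_trans[OF opnorm_nonneg Ab(1)])
  have kap0: "0 \<le> \<kappa>"
  proof -
    have "opnorm (cocycle_pow A f 0 X ** Q) * opnorm (matrix_inv (cocycle_pow A f 0 X ** Q)) \<le> \<kappa>"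
      by (rule kap) (use n in simp)
    moreover have "0 \<le> opnorm (cocycle_pow A f 0 X ** Q) * opnorm (matrix_inv (cocycle_pow A f 0 X ** Q))"
      by (intro mult_nonneg_nonneg opnorm_nonneg)
    ultimately show ?thesis by linarith
  qed
  have CQ: "invertible (cocycle_pow A f k X ** Q)" for k
    by (intro invertible_mult2 Q cocycle_pow_invertible[OF Ainv])
  define L where "L = 2 * \<kappa> * \<psi>"
  have L0: "0 \<le> L" using kap0 \<psi>0 by (simp add: L_def)
  have smallL: "K0 * L < \<epsilon>"
  proof -
    have "K0 * L \<le> K0 * (2 * \<kappa> * (\<Phi> / real n))"
      unfolding L_def using K0 kap0 \<psi>le by (intro mult_left_mono) auto
    thus ?thesis using small by linarith
  qed
  define \<gamma> where "\<gamma> = (\<lambda>t x. if x \<in> orbit f X then A x ** E (idx x) t else A x)"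
  have E0: "E k 0 = mat 1" if "k < p" for k using CQ by (simp add: E_def cq_0)
  have Einv: "invertible (E k t)" if "k < p" for k t
    using invertible_cq[OF CQ] invertible_mat1 by (simp add: E_def)
  have EL: "opnorm (E k s - E k t) \<le> L * \<bar>s - t\<bar>" for k s t
  proof (cases "k < n")
    case True
    have "opnorm (E k s - E k t) \<le> 2 * \<kappa> * \<bar>s * \<psi> - t * \<psi>\<bar>"
      using True kap by (simp add: E_def opnorm_cq_diff)
    also have "\<dots> = L * \<bar>s - t\<bar>" using \<psi>0
      by (simp add: L_def abs_mult left_diff_distrib[symmetric])
    finally show ?thesis .
  next
    case False thus ?thesis using L0 by (simp add: E_def opnorm_zero)
  qed
  have EL': "opnorm (matrix_inv (E k s) - matrix_inv (E k t)) \<le> L * \<bar>s - t\<bar>" for k s t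
  proof (cases "k < n")
    case True
    have "opnorm (matrix_inv (E k s) - matrix_inv (E k t)) \<le> 2 * \<kappa> * \<bar>- (s * \<psi>) - - (t * \<psi>)\<bar>"
      using True opnorm_cq_diff[OF kap[OF True], of "- (s * \<psi>)" "- (t * \<psi>)"] CQ by (simp add: E_def cq_inv)
    also have "\<dots> = L * \<bar>s - t\<bar>" using \<psi>0
      by (simp add: L_def abs_mult left_diff_distrib[symmetric] abs_minus_commute)
    finally show ?thesis .
  next
    case False
    have "matrix_inv (mat 1 :: mat2) = mat 1" using matrix_inv_unique2(1)[of "mat 1" "mat 1"] by simp
    thus ?thesis using L0 False by (simp add: E_def opnorm_zero)
  qed
  note RP0 = rot_path[where A=A and E=E, OF Ainv Ab E0 Einv EL EL' L0 smallL]
  have RP: "C_path f X \<gamma>" "\<forall>x\<in>orbit f X. \<gamma> 0 x = A x" "C_diam f X \<gamma> < \<epsilon>"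
        "\<And>t. return_map f (\<gamma> t) X = iprod (\<lambda>k. A ((f^^k) X) ** E k t) p"
    unfolding \<gamma>_def using RP0 by auto
  have ret: "return_map f (\<gamma> t) X = M ** Q ** rot (t * \<phi>e) ** matrix_inv Q" for t
  proof -
    have "return_map f (\<gamma> t) X = iprod (\<lambda>k. A ((f^^k) X) ** E k t) p" by (rule RP(4))
    also have "\<dots> = M ** Q ** rot (real (min p n) * (t * \<psi>)) ** matrix_inv Q"
      unfolding E_def M_def by (rule iprodG[OF Ainv Q n(2)]) simp
    also have "real (min p n) * (t * \<psi>) = t * \<phi>e" using n by (simp add: \<psi>_def min_def)
    finally show ?thesis .
  qed
  show ?thesis
  proof (intro exI finish)
    show "C_path f X \<gamma>" "\<forall>x\<in>orbit f X. \<gamma> 0 x = A x" "C_diam f X \<gamma> < \<epsilon>" using RP by auto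
    show "0 < D" by (rule D0)
    fix t :: real
    show "det (return_map f (\<gamma> t) X) = D"
      unfolding ret D_def using det_conj[OF Q] det_rot by simp
    show "tr2 (return_map f (\<gamma> t) X) = T (t * \<phi>e)"
      unfolding ret tr2_conj tr2_rot N_def[symmetric] using trN by (simp add: T_def bb_def)
  next
    fix s t :: real assume "s \<in> {0..1}" "t \<in> {0..1}" "s \<le> t"
    hence st: "0 \<le> s" "s \<le> t" "t \<le> 1" by auto
    have "s * \<phi>e \<le> t * \<phi>e" using st \<phi>e by (intro mult_right_mono) auto
    moreover have "0 \<le> s * \<phi>e" using st \<phi>e by simp
    moreover have "t * \<phi>e \<le> 1 * \<phi>e" using st \<phi>e by (intro mult_right_mono) auto
    ultimately show "T (t * \<phi>e) \<le> T (s * \<phi>e)"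
      using \<phi>e \<Phi> by (intro Tanti) auto
  next
    show "0 \<le> T (1 * \<phi>e)" "T (1 * \<phi>e) < 2 * sqrt D" using \<phi>e by auto
  qed
qed

end


lemma sin_arctan_sq: "(sin (arctan x))^2 = x^2 / (1 + x^2)"
  by (simp add: sin_arctan power_divide)

lemma funpow_add_apply: "(f^^(a+b)) x = (f^^b) ((f^^a) x)"
  by (subst add.commute) (simp add: funpow_add)

context porb
begin

lemma mech3:
  fixes A :: "'a \<Rightarrow> mat2" and Q :: mat2 and m :: nat and \<sigma> l1 l2 K0 \<kappa> \<epsilon> :: real
  assumes Ainv: "\<And>x. invertible (A x)"
   and Ab: "\<And>x. opnorm (A x) \<le> K0" "\<And>x. opnorm (matrix_inv (A x)) \<le> K0"
   and m: "0 < m" "m < p" and Q: "invertible Q"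
   and diag: "matrix_inv Q ** cocycle_pow A f p X ** Q = M2 l1 0 0 l2"
   and l: "0 < l1" "l1 \<le> l2" and \<sigma>: "0 < \<sigma>"
   and kq: "opnorm Q * opnorm (matrix_inv Q) \<le> \<kappa>"
   and kq': "opnorm (cocycle_pow A f m X ** Q ** M2 1 0 0 \<sigma>) *
             opnorm (matrix_inv (cocycle_pow A f m X ** Q ** M2 1 0 0 \<sigma>)) \<le> \<kappa>"
   and small: "K0 * (2 * \<kappa> * sqrt (2 / \<sigma>)) < \<epsilon>"
  shows "\<exists>\<gamma>. good f A \<epsilon> X \<gamma>"
proof -
  define M where "M = cocycle_pow A f p X"
  define C where "C = cocycle_pow A f m X"
  define \<Delta> where "\<Delta> = M2 1 0 0 \<sigma>"
  define Q' where "Q' = C ** Q ** \<Delta>"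
  have Cinv: "invertible C" unfolding C_def by (rule cocycle_pow_invertible[OF Ainv])
  have \<Delta>inv: "invertible \<Delta>" "matrix_inv \<Delta> = M2 1 0 0 (1/\<sigma>)"
    using matrix_inv_M2[of 1 \<sigma> 0 0] \<sigma> by (simp_all add: \<Delta>_def)
  have Q'inv: "invertible Q'" unfolding Q'_def using Cinv Q \<Delta>inv by (simp add: invertible_mult2)
  define S where "S = l1 / \<sigma> + l2 * \<sigma>"
  have S0: "0 < S" using l \<sigma> by (simp add: S_def add_pos_pos)
  define y where "y = (l1 + l2) / S"
  have y0: "0 \<le> y" using l S0 by (simp add: y_def)
  have y2: "y \<le> 2 / \<sigma>"
  proof -
    have "l1 + l2 \<le> 2 * l2" using l by simp
    moreover have "l2 * \<sigma> \<le> S" using l \<sigma> by (simp add: S_def)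
    ultimately have "(l1 + l2) / S \<le> (2 * l2) / (l2 * \<sigma>)"
      using l \<sigma> S0 by (intro frac_le) auto
    thus ?thesis using l by (simp add: y_def)
  qed
  define \<phi>e where "\<phi>e = arctan (sqrt y)"
  have \<phi>e: "0 \<le> \<phi>e" "\<phi>e \<le> sqrt (2 / \<sigma>)" "\<phi>e < pi/2"
  proof -
    show "0 \<le> \<phi>e" using y0 by (simp add: \<phi>e_def)
    have "\<phi>e \<le> sqrt y" unfolding \<phi>e_def by (rule arctan_le_self) (simp add: y0)
    also have "\<dots> \<le> sqrt (2 / \<sigma>)" using y2 by simp
    finally show "\<phi>e \<le> sqrt (2 / \<sigma>)" .
    show "\<phi>e < pi/2" unfolding \<phi>e_def by (rule arctan_ubound)
  qed
  define E where "E = (\<lambda>k t. if k = 0 then cq Q (t * \<phi>e) else if k = m then cq Q' (t * \<phi>e) else mat 1)"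
  have K0: "0 \<le> K0" by (rule order_trans[OF opnorm_nonneg Ab(1)])
  have kap0: "0 \<le> \<kappa>" by (rule order_trans[OF mult_nonneg_nonneg[OF opnorm_nonneg opnorm_nonneg] kq])
  have kq'': "opnorm Q' * opnorm (matrix_inv Q') \<le> \<kappa>" using kq' by (simp add: Q'_def C_def \<Delta>_def)
  define L where "L = 2 * \<kappa> * \<phi>e"
  have L0: "0 \<le> L" using kap0 \<phi>e by (simp add: L_def)
  have smallL: "K0 * L < \<epsilon>"
  proof -
    have "K0 * L \<le> K0 * (2 * \<kappa> * sqrt (2 / \<sigma>))"
      unfolding L_def using K0 kap0 \<phi>e by (intro mult_left_mono) auto
    thus ?thesis using small by linarith
  qed
  have E0: "E k 0 = mat 1" if "k < p" for k using Q Q'inv by (simp add: E_def cq_0)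
  have Einv: "invertible (E k t)" if "k < p" for k t
    using invertible_cq[OF Q] invertible_cq[OF Q'inv] invertible_mat1 by (simp add: E_def)
  have cqb: "opnorm (cq P (s * \<phi>e) - cq P (t * \<phi>e)) \<le> L * \<bar>s - t\<bar>
           \<and> opnorm (matrix_inv (cq P (s * \<phi>e)) - matrix_inv (cq P (t * \<phi>e))) \<le> L * \<bar>s - t\<bar>"
    if P: "invertible P" "opnorm P * opnorm (matrix_inv P) \<le> \<kappa>" for P s t
  proof -
    have e: "2 * \<kappa> * \<bar>a * \<phi>e - b * \<phi>e\<bar> = L * \<bar>a - b\<bar>" for a b
      using \<phi>e by (simp add: L_def abs_mult left_diff_distrib[symmetric])
    have 1: "opnorm (cq P (s * \<phi>e) - cq P (t * \<phi>e)) \<le> L * \<bar>s - t\<bar>"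
      using opnorm_cq_diff[OF P(2), of "s * \<phi>e" "t * \<phi>e"] e by simp
    have "opnorm (cq P (- (s * \<phi>e)) - cq P (- (t * \<phi>e))) \<le> 2 * \<kappa> * \<bar>t * \<phi>e - s * \<phi>e\<bar>"
      using opnorm_cq_diff[OF P(2), of "- (s * \<phi>e)" "- (t * \<phi>e)"] by simp
    hence 2: "opnorm (matrix_inv (cq P (s * \<phi>e)) - matrix_inv (cq P (t * \<phi>e))) \<le> L * \<bar>s - t\<bar>"
      using e[of t s] by (simp add: cq_inv[OF P(1)] abs_minus_commute)
    show ?thesis using 1 2 by simp
  qed
  have matinv1: "matrix_inv (mat 1 :: mat2) = mat 1" using matrix_inv_unique2(1)[of "mat 1" "mat 1"] by simp
  have EL: "opnorm (E k s - E k t) \<le> L * \<bar>s - t\<bar>" for k s t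
    using cqb[OF Q kq] cqb[OF Q'inv kq''] L0 by (simp add: E_def opnorm_zero)
  have EL': "opnorm (matrix_inv (E k s) - matrix_inv (E k t)) \<le> L * \<bar>s - t\<bar>" for k s t
    using cqb[OF Q kq] cqb[OF Q'inv kq''] L0 by (simp add: E_def opnorm_zero matinv1)
  define \<gamma> where "\<gamma> = (\<lambda>t x. if x \<in> orbit f X then A x ** E (idx x) t else A x)"
  note RP0 = rot_path[where A=A and E=E, OF Ainv Ab E0 Einv EL EL' L0 smallL]
  have RP: "C_path f X \<gamma>" "\<forall>x\<in>orbit f X. \<gamma> 0 x = A x" "C_diam f X \<gamma> < \<epsilon>"
        "\<And>t. return_map f (\<gamma> t) X = iprod (\<lambda>k. A ((f^^k) X) ** E k t) p"
    unfolding \<gamma>_def using RP0 by auto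
  define Z where "Z = (\<lambda>t. \<Delta> ** rot (t * \<phi>e) ** matrix_inv \<Delta> ** rot (t * \<phi>e))"
  have ret: "return_map f (\<gamma> t) X = M ** Q ** Z t ** matrix_inv Q" for t
  proof -
    let ?B = "\<lambda>k. A ((f^^k) X) ** E k t"
    let ?R = "rot (t * \<phi>e)"
    have P1: "iprod ?B (Suc j) = cocycle_pow A f (Suc j) X ** cq Q (t * \<phi>e)" if "j < m" for j
      using that
    proof (induction j)
      case 0 then show ?case by (simp add: E_def)
    next
      case (Suc j)
      hence "Suc j \<noteq> m" "Suc j \<noteq> 0" by auto
      with Suc show ?case by (simp add: E_def matrix_mul_assoc)
    qed
    have Pm: "iprod ?B m = C ** cq Q (t * \<phi>e)"
      using P1[of "m - 1"] m by (simp add: C_def)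
    have Pm1: "iprod ?B (Suc m) = cocycle_pow A f (Suc m) X ** Q ** Z t ** matrix_inv Q"
    proof -
      have "iprod ?B (Suc m) = A ((f^^m) X) ** cq Q' (t * \<phi>e) ** (C ** cq Q (t * \<phi>e))"
        using Pm m by (simp add: E_def)
      also have "\<dots> = A ((f^^m) X) ** (C ** (Q ** (\<Delta> ** (?R ** (matrix_inv \<Delta> ** (matrix_inv Q ** (matrix_inv C ** (C ** (Q ** (?R ** matrix_inv Q))))))))))"
        unfolding cq_def Q'_def
        using matrix_inv_mult2[OF invertible_mult2[OF Cinv Q] \<Delta>inv(1)] matrix_inv_mult2[OF Cinv Q]
        by (simp only: matrix_mul_assoc[symmetric])
      also have "\<dots> = A ((f^^m) X) ** (C ** (Q ** (\<Delta> ** (?R ** (matrix_inv \<Delta> ** (?R ** matrix_inv Q))))))"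
        by (simp only: inv_cancel[OF Cinv] inv_cancel[OF Q])
      also have "\<dots> = cocycle_pow A f (Suc m) X ** Q ** Z t ** matrix_inv Q"
        by (simp add: Z_def C_def matrix_mul_assoc)
      finally show ?thesis .
    qed
    have W: "iprod ?B (Suc m + (p - Suc m)) = iprod (\<lambda>k. A ((f^^k) ((f^^Suc m) X))) (p - Suc m) ** iprod ?B (Suc m)"
    proof -
      have "iprod (\<lambda>k. ?B (Suc m + k)) (p - Suc m) = iprod (\<lambda>k. A ((f^^k) ((f^^Suc m) X))) (p - Suc m)"
        by (rule iprod_cong) (simp add: E_def funpow_add_apply[where a="Suc m", symmetric] del: funpow.simps)
      thus ?thesis using iprod_split[of ?B "Suc m" "p - Suc m"] by simp
    qed
    have pp: "Suc m + (p - Suc m) = p" using m by simp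
    have W': "iprod ?B p = cocycle_pow A f (p - Suc m) ((f^^Suc m) X) ** iprod ?B (Suc m)"
      unfolding cocycle_pow_iprod using W unfolding pp by (simp only:)
    have "return_map f (\<gamma> t) X = iprod ?B p" by (rule RP(4))
    also have "\<dots> = cocycle_pow A f (p - Suc m) ((f^^Suc m) X) ** (cocycle_pow A f (Suc m) X ** Q ** Z t ** matrix_inv Q)"
      unfolding W' Pm1 by (rule refl)
    also have "\<dots> = (cocycle_pow A f (p - Suc m) ((f^^Suc m) X) ** cocycle_pow A f (Suc m) X) ** Q ** Z t ** matrix_inv Q"
      by (simp only: matrix_mul_assoc)
    also have "\<dots> = M ** Q ** Z t ** matrix_inv Q"
      unfolding cocycle_pow_add[of A f "Suc m" "p - Suc m" X, symmetric] pp M_def by (rule refl)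
    finally show ?thesis .
  qed
  have detZ: "det (Z t) = 1" for t
    using \<Delta>inv \<sigma> by (simp add: Z_def det_mul det_rot \<Delta>_def)
  have trZ: "tr2 (M2 l1 0 0 l2 ** Z t) = (l1 + l2) - (sin (t * \<phi>e))^2 * (l1 + l2 + S)" for t
  proof -
    have "tr2 (M2 l1 0 0 l2 ** Z t) = l1 * ((cos (t*\<phi>e))^2 - (sin (t*\<phi>e))^2 / \<sigma>) + l2 * ((cos (t*\<phi>e))^2 - \<sigma> * (sin (t*\<phi>e))^2)"
    proof -
      have dinv: "matrix_inv (M2 1 0 0 \<sigma>) = M2 1 0 0 (1/\<sigma>)" using \<Delta>inv(2) by (simp add: \<Delta>_def)
      show ?thesis unfolding Z_def \<Delta>_def dinv
        using \<sigma> by (simp add: rot_def power2_eq_square field_simps)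
    qed
    also have "\<dots> = (l1 + l2) - (sin (t * \<phi>e))^2 * (l1 + l2 + S)"
      using \<sigma> unfolding cos_squared_eq S_def by (simp add: field_simps)
    finally show ?thesis .
  qed
  define T where "T = (\<lambda>t. (l1 + l2) - (sin (t * \<phi>e))^2 * (l1 + l2 + S))"
  define D where "D = l1 * l2"
  have detM: "det M = D"
  proof -
    have "det (matrix_inv Q ** M ** Q) = det M"
    proof -
      have i: "det (matrix_inv Q) * det Q = 1"
        using matrix_inv_left[OF Q] det_mul[of "matrix_inv Q" Q] by simp
      have "det (matrix_inv Q ** M ** Q) = det M * (det (matrix_inv Q) * det Q)"
        by (simp add: det_mul)
      thus ?thesis using i by simp
    qed
    thus ?thesis using diag by (simp add: M_def D_def)
  qed
  show ?thesis
  proof (intro exI finish)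
    show "C_path f X \<gamma>" "\<forall>x\<in>orbit f X. \<gamma> 0 x = A x" "C_diam f X \<gamma> < \<epsilon>" using RP by auto
    show "0 < D" using l by (simp add: D_def)
    fix t :: real
    show "det (return_map f (\<gamma> t) X) = D"
      unfolding ret using det_conj[OF Q] detZ detM by simp
    show "tr2 (return_map f (\<gamma> t) X) = T t"
      unfolding ret tr2_conj using diag trZ by (simp add: T_def M_def)
  next
    fix s t :: real assume "s \<in> {0..1}" "t \<in> {0..1}" "s \<le> t"
    hence st: "0 \<le> s" "s \<le> t" "t \<le> 1" by auto
    have a: "s * \<phi>e \<le> t * \<phi>e" using st \<phi>e by (intro mult_right_mono) auto
    have b: "0 \<le> s * \<phi>e" using st \<phi>e by simp
    have c: "t * \<phi>e \<le> 1 * \<phi>e" using st \<phi>e by (intro mult_right_mono) auto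
    have "sin (s * \<phi>e) \<le> sin (t * \<phi>e)" using a b c \<phi>e by (intro sin_monotone_2pi_le) auto
    moreover have "0 \<le> sin (s * \<phi>e)" using a b c \<phi>e by (intro sin_ge_zero) auto
    ultimately have "(sin (s * \<phi>e))^2 \<le> (sin (t * \<phi>e))^2" by (intro power_mono)
    moreover have "0 \<le> l1 + l2 + S" using l S0 by simp
    ultimately show "T t \<le> T s" unfolding T_def by (simp add: mult_right_mono)
  next
    have "T 1 = 0"
    proof -
      have sy: "(sin \<phi>e)^2 = y / (1 + y)" unfolding \<phi>e_def sin_arctan_sq using y0 by simp
      have k: "y * (l1 + l2 + S) = (l1 + l2) * (1 + y)"
        unfolding y_def using S0 by (simp add: field_simps)
      have y1: "0 < 1 + y" using y0 by simp
      have "(sin \<phi>e)^2 * (l1 + l2 + S) = (y * (l1 + l2 + S)) / (1 + y)"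
        using sy by simp
      also have "\<dots> = l1 + l2" unfolding k using y1 by simp
      finally have "(sin \<phi>e)^2 * (l1 + l2 + S) = l1 + l2" .
      thus ?thesis by (simp add: T_def)
    qed
    thus "0 \<le> T 1" "T 1 < 2 * sqrt D" using l by (auto simp: D_def)
  qed
qed

end


definition cols :: "real^2 \<Rightarrow> real^2 \<Rightarrow> mat2" where
  "cols u w = M2 (u$1) (w$1) (u$2) (w$2)"

lemma det_cols: "det (cols u w) = u$1 * w$2 - w$1 * u$2"
  by (simp add: cols_def)

lemma cols_V2[simp]: "cols (V2 a b) (V2 c d) = M2 a c b d" by (simp add: cols_def)

lemma mult_cols: "M ** cols u w = cols (M *v u) (M *v w)"
proof -
  obtain a b c d where M: "M = M2 a b c d" using M2_eta by blast
  obtain u1 u2 where U: "u = V2 u1 u2" using V2_eta by blast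
  obtain w1 w2 where W: "w = V2 w1 w2" using V2_eta by blast
  show ?thesis unfolding M U W by simp
qed

lemma frob_cols: "(cols u w)$1$1^2 + (cols u w)$1$2^2 + (cols u w)$2$1^2 + (cols u w)$2$2^2 = (norm u)^2 + (norm w)^2"
proof -
  obtain u1 u2 where U: "u = V2 u1 u2" using V2_eta by blast
  obtain w1 w2 where W: "w = V2 w1 w2" using V2_eta by blast
  show ?thesis unfolding U W by (simp add: norm_V2)
qed

lemma lagrange2: "(u \<bullet> w)^2 + (det (cols u w))^2 = (norm u)^2 * (norm w)^2"
proof -
  obtain u1 u2 where U: "u = V2 u1 u2" using V2_eta by blast
  obtain w1 w2 where W: "w = V2 w1 w2" using V2_eta by blast
  show ?thesis unfolding U W by (simp add: norm_V2 inner_V2 power2_eq_square algebra_simps)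
qed

lemma mat_vec_scaleR: "(M::mat2) *v (c *\<^sub>R v) = c *\<^sub>R (M *v v)"
proof -
  obtain a b c d where M: "M = M2 a b c d" using M2_eta by blast
  obtain u1 u2 where U: "v = V2 u1 u2" using V2_eta by blast
  show ?thesis unfolding M U by (simp add: algebra_simps)
qed

lemma mat_vec_add: "(M::mat2) *v (v + w) = M *v v + M *v w"
  by (simp add: matrix_vector_right_distrib)

lemma mat_vec_zero: "(M::mat2) *v 0 = 0"
  by simp

lemma frame_diag:
  assumes u: "M *v u = l1 *\<^sub>R u" and w: "M *v w = l2 *\<^sub>R w" and D: "det (cols u w) \<noteq> 0"
  shows "matrix_inv (cols u w) ** M ** cols u w = M2 l1 0 0 l2"
proof -
  have inv: "invertible (cols u w)" using D by (simp add: invertible_iff_det)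
  have "M ** cols u w = cols u w ** M2 l1 0 0 l2"
  proof -
    obtain u1 u2 where U: "u = V2 u1 u2" using V2_eta by blast
    obtain w1 w2 where W: "w = V2 w1 w2" using V2_eta by blast
    show ?thesis unfolding mult_cols u w unfolding U W by (simp add: algebra_simps)
  qed
  hence "matrix_inv (cols u w) ** (M ** cols u w) = M2 l1 0 0 l2"
    by (simp add: inv_cancel[OF inv])
  thus ?thesis by (simp add: matrix_mul_assoc)
qed

lemma frame_antisym:
  assumes u: "M *v u = l1 *\<^sub>R u" and w: "M *v w = l2 *\<^sub>R w"
  shows "(M$2$1 - M$1$2) * det (cols u w) = (l1 - l2) * (u \<bullet> w)"
proof -
  obtain a b c d where M: "M = M2 a b c d" using M2_eta by blast
  obtain u1 u2 where U: "u = V2 u1 u2" using V2_eta by blast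
  obtain w1 w2 where W: "w = V2 w1 w2" using V2_eta by blast
  have e: "a*u1 + b*u2 = l1*u1" "c*u1 + d*u2 = l1*u2" "a*w1 + b*w2 = l2*w1" "c*w1 + d*w2 = l2*w2"
    using u w unfolding M U W by (simp_all add: V2_eq_iff)
  have "(c - b) * (u1*w2 - w1*u2) = (l1 - l2) * (u1*w1 + u2*w2)"
    using e by algebra
  thus ?thesis unfolding M U W by (simp add: inner_V2)
qed

lemma frame_coords:
  assumes D: "det (cols u w) \<noteq> 0"
  shows "\<exists>\<alpha> \<beta>. v = \<alpha> *\<^sub>R u + \<beta> *\<^sub>R w"
proof -
  have inv: "invertible (cols u w)" using D by (simp add: invertible_iff_det)
  define z where "z = matrix_inv (cols u w) *v v"
  have "v = cols u w *v z"
    unfolding z_def by (simp add: matrix_vector_mul_assoc matrix_inv_right[OF inv])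
  also have "\<dots> = (z$1) *\<^sub>R u + (z$2) *\<^sub>R w"
  proof -
    obtain u1 u2 where U: "u = V2 u1 u2" using V2_eta by blast
    obtain w1 w2 where W: "w = V2 w1 w2" using V2_eta by blast
    obtain z1 z2 where Z: "z = V2 z1 z2" using V2_eta by blast
    show ?thesis unfolding U W Z by (simp add: algebra_simps)
  qed
  finally show ?thesis by blast
qed

lemma eigvec_line:
  assumes u: "M *v u = l1 *\<^sub>R u" and w: "M *v w = l2 *\<^sub>R w" and D: "det (cols u w) \<noteq> 0"
    and l: "l1 \<noteq> l2" and v: "M *v v = l1 *\<^sub>R v"
  shows "\<exists>c. v = c *\<^sub>R u"
proof -
  obtain \<alpha> \<beta> where vv: "v = \<alpha> *\<^sub>R u + \<beta> *\<^sub>R w" using frame_coords[OF D] by blast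
  have "M *v v = \<alpha> *\<^sub>R (l1 *\<^sub>R u) + \<beta> *\<^sub>R (l2 *\<^sub>R w)"
    unfolding vv mat_vec_add mat_vec_scaleR u w by simp
  hence "\<alpha> *\<^sub>R (l1 *\<^sub>R u) + \<beta> *\<^sub>R (l2 *\<^sub>R w) = l1 *\<^sub>R (\<alpha> *\<^sub>R u + \<beta> *\<^sub>R w)" using v vv by simp
  hence "(\<beta> * (l2 - l1)) *\<^sub>R w = 0" by (simp add: algebra_simps)
  moreover have "w \<noteq> 0" using D by (auto simp: det_cols)
  ultimately have "\<beta> = 0" using l by simp
  thus ?thesis using vv by auto
qed

lemma eig_from_diag:
  assumes M: "M = P ** M2 d1 0 0 d2 ** matrix_inv P" and P: "invertible P"
  shows "M *v (V2 (P$1$1) (P$2$1)) = d1 *\<^sub>R V2 (P$1$1) (P$2$1)"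
    "M *v (V2 (P$1$2) (P$2$2)) = d2 *\<^sub>R V2 (P$1$2) (P$2$2)"
    "det (cols (V2 (P$1$1) (P$2$1)) (V2 (P$1$2) (P$2$2))) = det P"
    "tr2 M = d1 + d2" "det M = d1 * d2"
proof -
  have MP: "M ** P = P ** M2 d1 0 0 d2"
    using M by (simp add: matrix_mul_assoc[symmetric] matrix_inv_left[OF P])
  have cP: "P = cols (V2 (P$1$1) (P$2$1)) (V2 (P$1$2) (P$2$2))"
    by (subst M2_eta[of P]) simp
  have "cols (M *v V2 (P$1$1) (P$2$1)) (M *v V2 (P$1$2) (P$2$2)) =
        cols (d1 *\<^sub>R V2 (P$1$1) (P$2$1)) (d2 *\<^sub>R V2 (P$1$2) (P$2$2))"
    using MP unfolding mult_cols[symmetric] cP[symmetric]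
    by (subst (asm) M2_eta[of P]) (simp add: algebra_simps)
  thus "M *v (V2 (P$1$1) (P$2$1)) = d1 *\<^sub>R V2 (P$1$1) (P$2$1)"
    "M *v (V2 (P$1$2) (P$2$2)) = d2 *\<^sub>R V2 (P$1$2) (P$2$2)"
    unfolding cols_def by (simp_all add: M2_eq_iff vec_eq_iff forall_2)
  show "det (cols (V2 (P$1$1) (P$2$1)) (V2 (P$1$2) (P$2$2))) = det P"
    by (subst (2) M2_eta[of P]) simp
  have "tr2 M = tr2 (M2 d1 0 0 d2 ** matrix_inv P ** P)"
    unfolding M using tr2_comm[of P "M2 d1 0 0 d2 ** matrix_inv P"] by (simp add: matrix_mul_assoc)
  thus "tr2 M = d1 + d2" by (simp add: matrix_mul_assoc[symmetric] matrix_inv_left[OF P])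
  have "det P * det (matrix_inv P) = 1" using matrix_inv_right[OF P] det_mul[of P "matrix_inv P"] by simp
  thus "det M = d1 * d2" unfolding M by (simp add: det_mul)
qed

lemma diag_chi: "((\<chi> i j. if i = j then d i else (0::real)) :: mat2) = M2 (d 1) 0 0 (d 2)"
  by (simp add: vec_eq_iff forall_2 M2_def)


lemma porb_shift: "porb f X p \<Longrightarrow> porb f (f X) p"
proof -
  assume P: "porb f X p"
  interpret porb f X p by (rule P)
  show ?thesis
  proof
    show "inj f" "0 < p" by (rule inj_f, rule p_pos)
    show "(f ^^ p) (f X) = f X" using p_ret by (metis funpow_swap1)
    fix q assume q: "0 < q" "q < p"
    show "(f ^^ q) (f X) \<noteq> f X"
    proof
      assume "(f ^^ q) (f X) = f X"
      hence "f ((f ^^ q) X) = f X" by (metis funpow_swap1)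
      hence "(f ^^ q) X = X" using inj_f by (simp add: inj_eq)
      thus False using p_min q by blast
    qed
  qed
qed

lemma porb_iter: "porb f X p \<Longrightarrow> porb f ((f^^k) X) p"
  by (induction k) (auto dest: porb_shift)

locale cocy =
  fixes f :: "'a \<Rightarrow> 'a" and A :: "'a \<Rightarrow> mat2" and K0 \<epsilon> :: real
  assumes inj_f: "inj f" and per: "periodic_map f" and Ainv: "\<And>x. invertible (A x)"
   and Ab1: "\<And>x. opnorm (A x) \<le> K0" and Ab2: "\<And>x. opnorm (matrix_inv (A x)) \<le> K0"
   and K0: "0 < K0" and eps: "0 < \<epsilon>" and diagp: "diagonalizable_pos f A"
   and nogood: "\<And>X \<gamma>. \<not> good f A \<epsilon> X \<gamma>"
begin

definition pr :: "'a \<Rightarrow> nat" where "pr y = period f y"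
definition Mr :: "'a \<Rightarrow> mat2" where "Mr y = cocycle_pow A f (pr y) y"
definition Cp :: "nat \<Rightarrow> 'a \<Rightarrow> mat2" where "Cp k y = cocycle_pow A f k y"

lemma porb_y: "porb f y (pr y)"
  unfolding pr_def by (rule porb_of_periodic[OF inj_f]) (use per in \<open>auto simp: periodic_map_def\<close>)

lemma pr_pos: "0 < pr y" using porb.p_pos[OF porb_y] .

lemma pr_iter: "pr ((f^^k) y) = pr y"
proof -
  have "porb f ((f^^k) y) (pr y)" by (rule porb_iter[OF porb_y])
  thus ?thesis unfolding pr_def using porb.period_eq by (metis pr_def)
qed

lemma pr_ret: "(f^^(pr y)) y = y" using porb.p_ret[OF porb_y] .

lemma Cp_inv: "invertible (Cp k y)" unfolding Cp_def by (rule cocycle_pow_invertible[OF Ainv])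

lemma Cp_add: "Cp (a + b) y = Cp b ((f^^a) y) ** Cp a y"
  unfolding Cp_def by (rule cocycle_pow_add)

lemma Mr_conj: "Mr ((f^^k) y) ** Cp k y = Cp k y ** Mr y"
proof -
  have "Mr ((f^^k) y) ** Cp k y = Cp (k + pr y) y"
    unfolding Mr_def Cp_def pr_iter using cocycle_pow_add[of A f k "pr y" y] by simp
  also have "\<dots> = Cp (pr y + k) y" by (simp add: add.commute)
  also have "\<dots> = Cp k y ** Mr y" unfolding Cp_add Mr_def pr_ret by (simp add: Cp_def)
  finally show ?thesis .
qed

lemma Mr_conj': "Mr ((f^^k) y) = Cp k y ** Mr y ** matrix_inv (Cp k y)"
  using Mr_conj[of k y] by (metis inv_cancel' Cp_inv matrix_mul_assoc matrix_mul_rid matrix_inv_right)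

lemma tr_det_iter: "tr2 (Mr ((f^^k) y)) = tr2 (Mr y)" "det (Mr ((f^^k) y)) = det (Mr y)"
proof -
  have "tr2 (Cp k y ** Mr y ** matrix_inv (Cp k y)) = tr2 (Mr y ** (matrix_inv (Cp k y) ** Cp k y))"
    using tr2_comm[of "Cp k y" "Mr y ** matrix_inv (Cp k y)"] by (simp add: matrix_mul_assoc)
  thus "tr2 (Mr ((f^^k) y)) = tr2 (Mr y)" unfolding Mr_conj' by (simp add: matrix_inv_left[OF Cp_inv])
  have "det (Cp k y) * det (matrix_inv (Cp k y)) = 1"
    using matrix_inv_right[OF Cp_inv] det_mul[of "Cp k y" "matrix_inv (Cp k y)"] by simp
  thus "det (Mr ((f^^k) y)) = det (Mr y)" unfolding Mr_conj' by (simp add: det_mul)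
qed

lemma diag_y: "\<exists>P d1 d2. invertible P \<and> 0 < d1 \<and> 0 < d2 \<and> Mr y = P ** M2 d1 0 0 d2 ** matrix_inv P"
proof -
  obtain P and d :: "2 \<Rightarrow> real" where "invertible P" "\<forall>i. 0 < d i"
    "return_map f A y = P ** (\<chi> i j. if i = j then d i else 0) ** matrix_inv P"
    using diagp unfolding diagonalizable_pos_def by blast
  thus ?thesis unfolding diag_chi by (intro exI[of _ P] exI[of _ "d 1"] exI[of _ "d 2"])
      (auto simp: Mr_def return_map_def pr_def)
qed

definition lo :: "'a \<Rightarrow> real" where "lo y = Lm (tr2 (Mr y)) (det (Mr y))"
definition hi :: "'a \<Rightarrow> real" where "hi y = Lb (tr2 (Mr y)) (det (Mr y))"

lemma lo_hi_iter: "lo ((f^^k) y) = lo y" "hi ((f^^k) y) = hi y"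
  unfolding lo_def hi_def tr_det_iter by simp_all

lemma Lm_pair: assumes "0 < d1" "0 < d2" shows "Lm (d1 + d2) (d1 * d2) = min d1 d2" "Lb (d1 + d2) (d1 * d2) = max d1 d2"
proof -
  have e: "(d1 + d2)^2 - 4 * (d1 * d2) = (d1 - d2)^2" by (simp add: power2_eq_square algebra_simps)
  have le: "4 * (d1 * d2) \<le> (d1 + d2)^2" using e by (smt (verit) zero_le_power2)
  show "Lm (d1 + d2) (d1 * d2) = min d1 d2" "Lb (d1 + d2) (d1 * d2) = max d1 d2"
    unfolding Lm_def Lb_def using le e by (auto simp: min_def max_def)
qed

lemma eig_struct: "\<exists>u w. Mr y *v u = lo y *\<^sub>R u \<and> Mr y *v w = hi y *\<^sub>R w \<and> det (cols u w) \<noteq> 0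
     \<and> 0 < lo y \<and> lo y \<le> hi y \<and> tr2 (Mr y) = lo y + hi y \<and> det (Mr y) = lo y * hi y
     \<and> (lo y = hi y \<longrightarrow> Mr y = M2 (lo y) 0 0 (lo y))"
proof -
  obtain P d1 d2 where P: "invertible P" "0 < d1" "0 < d2" "Mr y = P ** M2 d1 0 0 d2 ** matrix_inv P"
    using diag_y by blast
  note E = eig_from_diag[OF P(4) P(1)]
  have dP: "det P \<noteq> 0" using P(1) by (simp add: invertible_iff_det)
  have lh: "lo y = min d1 d2" "hi y = max d1 d2"
    unfolding lo_def hi_def E(4,5) using Lm_pair[OF P(2,3)] by auto
  have scal: "lo y = hi y \<Longrightarrow> Mr y = M2 (lo y) 0 0 (lo y)"
  proof -
    assume "lo y = hi y"
    hence "d1 = d2" "lo y = d1" using lh by (auto simp: min_def max_def split: if_splits)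
    have comm: "P ** M2 d1 0 0 d1 = M2 d1 0 0 d1 ** P"
    proof -
      obtain a b c d where "P = M2 a b c d" using M2_eta by blast
      thus ?thesis by (simp add: algebra_simps)
    qed
    have "Mr y = M2 d1 0 0 d1 ** (P ** matrix_inv P)"
      using P(4) \<open>d1 = d2\<close> comm by (simp add: matrix_mul_assoc)
    thus ?thesis using matrix_inv_right[OF P(1)] \<open>lo y = d1\<close> by (simp add: mat1_M2)
  qed
  let ?u = "V2 (P$1$1) (P$2$1)" and ?w = "V2 (P$1$2) (P$2$2)"
  show ?thesis
  proof (cases "d1 \<le> d2")
    case True
    thus ?thesis using E dP lh P scal by (intro exI[of _ ?u] exI[of _ ?w]) auto
  next
    case False
    have "det (cols ?w ?u) = - det (cols ?u ?w)" by (simp add: cols_def)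
    thus ?thesis using E dP lh P False scal by (intro exI[of _ ?w] exI[of _ ?u]) auto
  qed
qed

lemma lo_pos: "0 < lo y" using eig_struct by blast
lemma lo_le_hi: "lo y \<le> hi y" using eig_struct by blast
lemma tr_Mr: "tr2 (Mr y) = lo y + hi y" using eig_struct by blast
lemma det_Mr: "det (Mr y) = lo y * hi y" using eig_struct by blast

end


context cocy
begin

definition phb :: real where "phb = min (pi/2) (\<epsilon> / (8 * K0))"

lemma phb: "0 < phb" "phb \<le> pi/2" "K0 * (2 * 2 * (phb / real (1::nat))) < \<epsilon>"
proof -
  show "0 < phb" using eps K0 by (simp add: phb_def)
  show "phb \<le> pi/2" by (simp add: phb_def)
  have "phb \<le> \<epsilon> / (8 * K0)" by (simp add: phb_def)
  hence "K0 * (4 * phb) \<le> K0 * (4 * (\<epsilon> / (8 * K0)))" using K0 by (intro mult_left_mono) auto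
  also have "\<dots> = \<epsilon> / 2" using K0 by (simp add: field_simps)
  finally show "K0 * (2 * 2 * (phb / real (1::nat))) < \<epsilon>" using eps by simp
qed

lemma kap_M2_diag: "opnorm (M2 1 0 0 s) * opnorm (matrix_inv (M2 1 0 0 s)) \<le> (1 + s^2) / \<bar>s\<bar>" if "s \<noteq> 0"
  using kap_bound[of "M2 1 0 0 s"] that by simp

lemma C2cond: "2 * sqrt (det (Mr y)) \<le> tr2 (Mr y) * cos phb - \<bar>Mr y $2$1 - Mr y $1$2\<bar> * sin phb"
proof (rule ccontr)
  assume H: "\<not> ?thesis"
  let ?M = "Mr y"
  interpret P: porb f y "pr y" by (rule porb_y)
  have trp: "0 < tr2 (cocycle_pow A f (pr y) y)" using tr_Mr[of y] lo_pos[of y] lo_le_hi[of y] by (simp add: Mr_def)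
  have dtp: "0 < det (cocycle_pow A f (pr y) y)" using det_Mr[of y] lo_pos[of y] lo_le_hi[of y] by (simp add: Mr_def)
  have n1: "1 \<le> (1::nat)" "(1::nat) \<le> pr y" using pr_pos[of y] by auto
  show False
  proof (cases "?M$1$2 \<le> ?M$2$1")
    case True
    have Q: "invertible (mat 1 :: mat2)" by (rule invertible_mat1)
    have kap: "\<And>k. k < (1::nat) \<Longrightarrow> opnorm (cocycle_pow A f k y ** mat 1) * opnorm (matrix_inv (cocycle_pow A f k y ** mat 1)) \<le> 2"
      using kap_M2_diag[of 1] by (simp add: mat1_M2)
    have mi: "matrix_inv (mat 1 :: mat2) = mat 1" using matrix_inv_unique2(1)[of "mat 1" "mat 1"] by simp
    have "\<exists>\<gamma>. good f A \<epsilon> y \<gamma>"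
      by (rule P.mechG[OF Ainv Ab1 Ab2 n1 Q kap phb(1,2) phb(3) trp dtp])
         (use True H in \<open>simp_all add: mi Mr_def\<close>)
    thus False using nogood by blast
  next
    case False
    define J where "J = M2 1 0 0 (-1)"
    have Q: "invertible J" by (simp add: J_def invertible_iff_det)
    have mi: "matrix_inv (M2 1 0 0 (-1)) = M2 1 0 0 (-1)" using matrix_inv_M2(1)[of 1 "-1" 0 0] by simp
    have kap: "\<And>k. k < (1::nat) \<Longrightarrow> opnorm (cocycle_pow A f k y ** J) * opnorm (matrix_inv (cocycle_pow A f k y ** J)) \<le> 2"
      using kap_M2_diag[of "-1"] by (simp add: J_def)
    obtain a b c d where M: "?M = M2 a b c d" using M2_eta by blast
    have "\<exists>\<gamma>. good f A \<epsilon> y \<gamma>"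
      by (rule P.mechG[OF Ainv Ab1 Ab2 n1 Q kap phb(1,2) phb(3) trp dtp])
         (use False H M in \<open>simp_all add: mi Mr_def[symmetric] J_def\<close>)
    thus False using nogood by blast
  qed
qed

lemma cos_phb: "cos phb < 1" "0 \<le> cos phb" "0 < sin phb"
proof -
  have "cos phb < cos 0" using phb by (intro cos_monotone_0_pi) auto
  thus "cos phb < 1" by simp
  show "0 \<le> cos phb" using phb by (intro cos_ge_zero) auto
  show "0 < sin phb" using phb by (intro sin_gt_zero) auto
qed

lemma lo_lt_hi: "lo y < hi y"
proof (rule ccontr)
  assume "\<not> lo y < hi y"
  hence e: "lo y = hi y" using lo_le_hi[of y] by simp
  hence M: "Mr y = M2 (lo y) 0 0 (lo y)" using eig_struct[of y] by blast
  have l: "0 < lo y" by (rule lo_pos)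
  have "2 * sqrt (det (Mr y)) \<le> tr2 (Mr y) * cos phb - \<bar>Mr y $2$1 - Mr y $1$2\<bar> * sin phb"
    by (rule C2cond)
  hence "2 * lo y \<le> 2 * lo y * cos phb" using l unfolding M by (simp add: power2_eq_square[symmetric])
  hence "1 \<le> cos phb" using l by simp
  thus False using cos_phb by simp
qed

definition fv :: "'a \<Rightarrow> real^2" where "fv y = (SOME u. norm u = 1 \<and> Mr y *v u = lo y *\<^sub>R u)"
definition gv :: "'a \<Rightarrow> real^2" where "gv y = (SOME u. norm u = 1 \<and> Mr y *v u = hi y *\<^sub>R u)"

lemma unit_eig:
  assumes "(M::mat2) *v u = l *\<^sub>R u" "u \<noteq> 0"
  shows "\<exists>v. norm v = 1 \<and> M *v v = l *\<^sub>R v"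
proof (intro exI conjI)
  show "norm ((1 / norm u) *\<^sub>R u) = 1" using assms(2) by simp
  show "M *v ((1 / norm u) *\<^sub>R u) = l *\<^sub>R ((1 / norm u) *\<^sub>R u)"
    unfolding mat_vec_scaleR assms(1) by simp
qed

lemma det_cols_scale: "det (cols (a *\<^sub>R u) (b *\<^sub>R w)) = a * b * det (cols u w)"
  by (simp add: det_cols algebra_simps)

lemma fv_gv: "norm (fv y) = 1" "Mr y *v fv y = lo y *\<^sub>R fv y"
   "norm (gv y) = 1" "Mr y *v gv y = hi y *\<^sub>R gv y" "det (cols (fv y) (gv y)) \<noteq> 0"
proof -
  obtain u w where uw: "Mr y *v u = lo y *\<^sub>R u" "Mr y *v w = hi y *\<^sub>R w" "det (cols u w) \<noteq> 0"
    using eig_struct[of y] by blast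
  have u0: "u \<noteq> 0" and w0: "w \<noteq> 0" using uw(3) by (auto simp: det_cols)
  have "\<exists>v. norm v = 1 \<and> Mr y *v v = lo y *\<^sub>R v" by (rule unit_eig[OF uw(1) u0])
  hence F: "norm (fv y) = 1 \<and> Mr y *v fv y = lo y *\<^sub>R fv y" unfolding fv_def by (rule someI_ex)
  have "\<exists>v. norm v = 1 \<and> Mr y *v v = hi y *\<^sub>R v" by (rule unit_eig[OF uw(2) w0])
  hence G: "norm (gv y) = 1 \<and> Mr y *v gv y = hi y *\<^sub>R gv y" unfolding gv_def by (rule someI_ex)
  show "norm (fv y) = 1" "Mr y *v fv y = lo y *\<^sub>R fv y" "norm (gv y) = 1" "Mr y *v gv y = hi y *\<^sub>R gv y"
    using F G by auto
  have ne: "lo y \<noteq> hi y" using lo_lt_hi[of y] by simp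
  obtain c where c: "fv y = c *\<^sub>R u" using eigvec_line[OF uw ne] F by blast
  have d2: "det (cols w u) \<noteq> 0" using uw(3) by (auto simp: det_cols algebra_simps)
  obtain c' where c': "gv y = c' *\<^sub>R w" using eigvec_line[OF uw(2) uw(1) d2 ne[symmetric]] G by blast
  have "c \<noteq> 0" "c' \<noteq> 0" using c c' F G by auto
  thus "det (cols (fv y) (gv y)) \<noteq> 0" unfolding c c' det_cols_scale using uw(3) by simp
qed

definition \<delta> :: real where "\<delta> = sin phb / sqrt 2"

lemma delta_pos: "0 < \<delta>" using cos_phb by (simp add: \<delta>_def)

lemma angle_bound: "\<delta> \<le> \<bar>det (cols (fv y) (gv y))\<bar>"
proof -
  let ?M = "Mr y" and ?D = "det (cols (fv y) (gv y))" and ?ip = "fv y \<bullet> gv y"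
  let ?s = "sin phb"
  have lh: "0 < lo y" "lo y < hi y" using lo_pos lo_lt_hi by auto
  have anti: "(?M$2$1 - ?M$1$2) * ?D = (lo y - hi y) * ?ip"
    by (rule frame_antisym[OF fv_gv(2) fv_gv(4)])
  have c2: "2 * sqrt (det ?M) \<le> tr2 ?M * cos phb - \<bar>?M $2$1 - ?M $1$2\<bar> * ?s" by (rule C2cond)
  have sq: "lo y \<le> sqrt (lo y * hi y)"
  proof -
    have "lo y * lo y \<le> lo y * hi y" using lh by simp
    hence "sqrt (lo y * lo y) \<le> sqrt (lo y * hi y)" by (rule real_sqrt_le_mono)
    thus ?thesis using lh by simp
  qed
  have "\<bar>?M $2$1 - ?M $1$2\<bar> * ?s \<le> tr2 ?M * cos phb - 2 * sqrt (det ?M)" using c2 by simp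
  also have "\<dots> \<le> tr2 ?M - 2 * sqrt (det ?M)"
    using cos_phb tr_Mr[of y] lh by (simp add: mult_left_le)
  also have "\<dots> \<le> hi y - lo y" using sq tr_Mr[of y] det_Mr[of y] by simp
  finally have k: "\<bar>?M $2$1 - ?M $1$2\<bar> * ?s \<le> hi y - lo y" .
  have "(hi y - lo y) * (\<bar>?ip\<bar> * ?s) = \<bar>?M $2$1 - ?M $1$2\<bar> * ?s * \<bar>?D\<bar>"
  proof -
    have "\<bar>(?M$2$1 - ?M$1$2) * ?D\<bar> = \<bar>(lo y - hi y) * ?ip\<bar>" using anti by simp
    hence h: "\<bar>?M$2$1 - ?M$1$2\<bar> * \<bar>?D\<bar> = (hi y - lo y) * \<bar>?ip\<bar>" using lh by (simp add: abs_mult)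
    have "(hi y - lo y) * (\<bar>?ip\<bar> * ?s) = ((hi y - lo y) * \<bar>?ip\<bar>) * ?s" by (rule mult.assoc[symmetric])
    also have "\<dots> = (\<bar>?M$2$1 - ?M$1$2\<bar> * \<bar>?D\<bar>) * ?s" by (simp only: h)
    also have "\<dots> = \<bar>?M $2$1 - ?M $1$2\<bar> * ?s * \<bar>?D\<bar>" by (simp only: mult_ac)
    finally show ?thesis .
  qed
  also have "\<dots> \<le> (hi y - lo y) * \<bar>?D\<bar>" using k by (intro mult_right_mono) auto
  finally have ipD: "\<bar>?ip\<bar> * ?s \<le> \<bar>?D\<bar>" using lh by simp
  have lag: "?ip^2 + ?D^2 = 1" using lagrange2[of "fv y" "gv y"] fv_gv[of y] by simp
  have "(\<bar>?ip\<bar> * ?s)^2 \<le> \<bar>?D\<bar>^2"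
    by (rule power_mono[OF ipD]) (use cos_phb in simp)
  hence "(\<bar>?ip\<bar> * ?s)^2 \<le> ?D^2" by simp
  hence "?ip^2 * ?s^2 \<le> ?D^2" by (simp add: power_mult_distrib)
  moreover have "?ip^2 = 1 - ?D^2" using lag by simp
  ultimately have "(1 - ?D^2) * ?s^2 \<le> ?D^2" by simp
  moreover have "?s^2 \<le> 1" using sin_squared_eq[of phb] by simp
  ultimately have "?s^2 \<le> ?D^2 * (1 + ?s^2)" by (simp add: algebra_simps)
  also have "\<dots> \<le> ?D^2 * 2" using \<open>?s^2 \<le> 1\<close> by (intro mult_left_mono) auto
  finally have "?s^2 / 2 \<le> ?D^2" by simp
  hence "sqrt (?s^2 / 2) \<le> sqrt (?D^2)" by (rule real_sqrt_le_mono)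
  thus ?thesis using cos_phb by (simp add: \<delta>_def real_sqrt_divide)
qed

lemma ratio_bound: "lo y / hi y \<le> (cos phb)^2"
proof -
  have lh: "0 < lo y" "lo y < hi y" using lo_pos lo_lt_hi by auto
  have c2: "2 * sqrt (det (Mr y)) \<le> tr2 (Mr y) * cos phb - \<bar>Mr y $2$1 - Mr y $1$2\<bar> * sin phb"
    by (rule C2cond)
  have "0 \<le> \<bar>Mr y $2$1 - Mr y $1$2\<bar> * sin phb" using cos_phb by simp
  hence "2 * sqrt (lo y * hi y) \<le> (lo y + hi y) * cos phb" using c2 tr_Mr det_Mr by simp
  also have "\<dots> \<le> (2 * hi y) * cos phb" using lh cos_phb by (intro mult_right_mono) auto
  finally have "sqrt (lo y * hi y) \<le> hi y * cos phb" by simp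
  hence "(sqrt (lo y * hi y))^2 \<le> (hi y * cos phb)^2"
    using lh by (intro power_mono) auto
  hence "lo y * hi y \<le> hi y^2 * (cos phb)^2" using lh by (simp add: power_mult_distrib)
  hence "lo y \<le> hi y * (cos phb)^2" using lh by (simp add: power2_eq_square)
  thus ?thesis using lh by (simp add: divide_le_eq mult.commute)
qed

end


context cocy
begin

definition Fs :: "'a \<Rightarrow> (real^2) set" where "Fs y = {v. Mr y *v v = lo y *\<^sub>R v}"
definition Gs :: "'a \<Rightarrow> (real^2) set" where "Gs y = {v. Mr y *v v = hi y *\<^sub>R v}"

lemma fv_in: "fv y \<in> Fs y" and gv_in: "gv y \<in> Gs y"
  using fv_gv by (auto simp: Fs_def Gs_def)

lemma fv_nz: "fv y \<noteq> 0" and gv_nz: "gv y \<noteq> 0"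
  using fv_gv(1,3)[of y] by auto

lemma Fs_line: "v \<in> Fs y \<Longrightarrow> \<exists>c. v = c *\<^sub>R fv y"
  using eigvec_line[OF fv_gv(2) fv_gv(4) fv_gv(5)] lo_lt_hi[of y] by (auto simp: Fs_def)

lemma Gs_line: "v \<in> Gs y \<Longrightarrow> \<exists>c. v = c *\<^sub>R gv y"
proof -
  have d: "det (cols (gv y) (fv y)) \<noteq> 0" using fv_gv(5)[of y] by (auto simp: det_cols algebra_simps)
  assume "v \<in> Gs y"
  thus ?thesis using eigvec_line[OF fv_gv(4) fv_gv(2) d] lo_lt_hi[of y] by (auto simp: Gs_def)
qed

lemma Cp_Fs: "v \<in> Fs y \<Longrightarrow> Cp k y *v v \<in> Fs ((f^^k) y)"
proof -
  assume v: "v \<in> Fs y"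
  have "Mr ((f^^k) y) *v (Cp k y *v v) = (Mr ((f^^k) y) ** Cp k y) *v v" by (simp add: matrix_vector_mul_assoc)
  also have "\<dots> = Cp k y *v (Mr y *v v)" by (simp add: Mr_conj matrix_vector_mul_assoc)
  also have "\<dots> = lo ((f^^k) y) *\<^sub>R (Cp k y *v v)" using v by (simp add: Fs_def mat_vec_scaleR lo_hi_iter)
  finally show ?thesis by (simp add: Fs_def)
qed

lemma Cp_Gs: "v \<in> Gs y \<Longrightarrow> Cp k y *v v \<in> Gs ((f^^k) y)"
proof -
  assume v: "v \<in> Gs y"
  have "Mr ((f^^k) y) *v (Cp k y *v v) = (Mr ((f^^k) y) ** Cp k y) *v v" by (simp add: matrix_vector_mul_assoc)
  also have "\<dots> = Cp k y *v (Mr y *v v)" by (simp add: Mr_conj matrix_vector_mul_assoc)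
  also have "\<dots> = hi ((f^^k) y) *\<^sub>R (Cp k y *v v)" using v by (simp add: Gs_def mat_vec_scaleR lo_hi_iter)
  finally show ?thesis by (simp add: Gs_def)
qed

lemma inv_nz: "invertible (M::mat2) \<Longrightarrow> v \<noteq> 0 \<Longrightarrow> M *v v \<noteq> 0"
  using inj_matrix_vector_mult[of M] by (metis inj_eq mat_vec_zero)

lemma Cp_fv: "\<exists>c. Cp k y *v fv y = c *\<^sub>R fv ((f^^k) y) \<and> \<bar>c\<bar> = norm (Cp k y *v fv y) \<and> c \<noteq> 0"
proof -
  obtain c where c: "Cp k y *v fv y = c *\<^sub>R fv ((f^^k) y)" using Fs_line[OF Cp_Fs[OF fv_in]] by blast
  have "norm (Cp k y *v fv y) = \<bar>c\<bar>" unfolding c using fv_gv(1) by simp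
  moreover have "Cp k y *v fv y \<noteq> 0" by (rule inv_nz[OF Cp_inv fv_nz])
  ultimately show ?thesis using c by auto
qed

lemma Cp_gv: "\<exists>c. Cp k y *v gv y = c *\<^sub>R gv ((f^^k) y) \<and> \<bar>c\<bar> = norm (Cp k y *v gv y) \<and> c \<noteq> 0"
proof -
  obtain c where c: "Cp k y *v gv y = c *\<^sub>R gv ((f^^k) y)" using Gs_line[OF Cp_Gs[OF gv_in]] by blast
  have "norm (Cp k y *v gv y) = \<bar>c\<bar>" unfolding c using fv_gv(3) by simp
  moreover have "Cp k y *v gv y \<noteq> 0" by (rule inv_nz[OF Cp_inv gv_nz])
  ultimately show ?thesis using c by auto
qed

definition nf :: "nat \<Rightarrow> 'a \<Rightarrow> real" where "nf n y = norm (Cp n y *v fv y)"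
definition ng :: "nat \<Rightarrow> 'a \<Rightarrow> real" where "ng n y = norm (Cp n y *v gv y)"
definition rr :: "nat \<Rightarrow> 'a \<Rightarrow> real" where "rr n y = nf n y / ng n y"

lemma nf_pos: "0 < nf n y" and ng_pos: "0 < ng n y"
  using inv_nz[OF Cp_inv fv_nz] inv_nz[OF Cp_inv gv_nz] by (auto simp: nf_def ng_def)

lemma rr_pos: "0 < rr n y" using nf_pos ng_pos by (simp add: rr_def)

lemma nf_add: "nf (a + b) y = nf a y * nf b ((f^^a) y)"
proof -
  obtain c where c: "Cp a y *v fv y = c *\<^sub>R fv ((f^^a) y)" "\<bar>c\<bar> = nf a y"
    using Cp_fv[of a y] unfolding nf_def by blast
  have "Cp (a + b) y *v fv y = Cp b ((f^^a) y) *v (Cp a y *v fv y)"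
    by (simp add: Cp_add matrix_vector_mul_assoc)
  also have "\<dots> = c *\<^sub>R (Cp b ((f^^a) y) *v fv ((f^^a) y))" unfolding c(1) by (simp add: mat_vec_scaleR)
  finally show ?thesis using c(2) by (simp add: nf_def)
qed

lemma ng_add: "ng (a + b) y = ng a y * ng b ((f^^a) y)"
proof -
  obtain c where c: "Cp a y *v gv y = c *\<^sub>R gv ((f^^a) y)" "\<bar>c\<bar> = ng a y"
    using Cp_gv[of a y] unfolding ng_def by blast
  have "Cp (a + b) y *v gv y = Cp b ((f^^a) y) *v (Cp a y *v gv y)"
    by (simp add: Cp_add matrix_vector_mul_assoc)
  also have "\<dots> = c *\<^sub>R (Cp b ((f^^a) y) *v gv ((f^^a) y))" unfolding c(1) by (simp add: mat_vec_scaleR)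
  finally show ?thesis using c(2) by (simp add: ng_def)
qed

lemma rr_add: "rr (a + b) y = rr a y * rr b ((f^^a) y)"
  unfolding rr_def nf_add ng_add by simp

lemma rr_0: "rr 0 y = 1"
  using fv_gv(1,3)[of y] by (simp add: rr_def nf_def ng_def Cp_def)

lemma rr_period: "rr (pr y) y = lo y / hi y"
proof -
  have "Cp (pr y) y = Mr y" by (simp add: Cp_def Mr_def)
  thus ?thesis using fv_gv[of y] lo_pos[of y] lo_lt_hi[of y] by (simp add: rr_def nf_def ng_def)
qed

lemma rr_qp: "rr (q * pr y + m) y = (lo y / hi y)^q * rr m y"
proof (induction q)
  case 0 then show ?case by simp
next
  case (Suc q)
  have "rr (Suc q * pr y + m) y = rr (pr y + (q * pr y + m)) y" by (simp add: add.assoc)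
  also have "\<dots> = rr (pr y) y * rr (q * pr y + m) ((f^^pr y) y)" by (rule rr_add)
  also have "\<dots> = (lo y / hi y) * ((lo y / hi y)^q * rr m y)" using Suc pr_ret[of y] rr_period[of y] by simp
  finally show ?case by simp
qed

lemma restr_line:
  assumes "\<And>v. v \<in> S \<Longrightarrow> \<exists>c. v = c *\<^sub>R u" and "u \<in> S" and "norm u = 1"
  shows "restr_norm (B::mat2) S = norm (B *v u)"
proof -
  have "(\<lambda>v. norm (B *v v)) ` {v \<in> S. norm v = 1} = {norm (B *v u)}"
  proof
    show "(\<lambda>v. norm (B *v v)) ` {v \<in> S. norm v = 1} \<subseteq> {norm (B *v u)}"
    proof clarify
      fix v assume v: "v \<in> S" "norm v = 1"
      obtain c where c: "v = c *\<^sub>R u" using assms(1)[OF v(1)] by blast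
      have "\<bar>c\<bar> = 1" using v(2) assms(3) unfolding c by simp
      thus "norm (B *v v) = norm (B *v u)" unfolding c mat_vec_scaleR by simp
    qed
    show "{norm (B *v u)} \<subseteq> (\<lambda>v. norm (B *v v)) ` {v \<in> S. norm v = 1}" using assms(2,3) by auto
  qed
  thus ?thesis unfolding restr_norm_def by simp
qed

lemma restr_Fs: "restr_norm B (Fs y) = norm (B *v fv y)"
  by (rule restr_line[OF Fs_line fv_in fv_gv(1)])

lemma restr_Gs: "restr_norm B (Gs y) = norm (B *v gv y)"
  by (rule restr_line[OF Gs_line gv_in fv_gv(3)])

lemma dom_prod: "restr_norm (Cp n y) (Fs y) * restr_norm (matrix_inv (Cp n y)) (Gs ((f^^n) y)) = rr n y"
proof -
  obtain c where c: "Cp n y *v gv y = c *\<^sub>R gv ((f^^n) y)" "\<bar>c\<bar> = ng n y" "c \<noteq> 0"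
    using Cp_gv[of n y] unfolding ng_def by blast
  have "gv ((f^^n) y) = (1/c) *\<^sub>R (Cp n y *v gv y)" using c by simp
  hence "matrix_inv (Cp n y) *v gv ((f^^n) y) = (1/c) *\<^sub>R gv y"
    by (simp add: mat_vec_scaleR matrix_vector_mul_assoc matrix_inv_left[OF Cp_inv])
  hence "norm (matrix_inv (Cp n y) *v gv ((f^^n) y)) = 1 / ng n y" using c fv_gv(3) by simp
  thus ?thesis unfolding restr_Fs restr_Gs by (simp add: rr_def nf_def)
qed

end


lemma kap_cols:
  assumes u: "norm u = 1" and w: "norm w = 1" and d: "det (cols u w) \<noteq> 0" and a: "a \<noteq> 0" and b: "b \<noteq> 0"
  shows "opnorm (cols (a *\<^sub>R u) (b *\<^sub>R w)) * opnorm (matrix_inv (cols (a *\<^sub>R u) (b *\<^sub>R w)))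
          \<le> (a^2 + b^2) / (\<bar>a\<bar> * \<bar>b\<bar> * \<bar>det (cols u w)\<bar>)"
proof -
  have D: "det (cols (a *\<^sub>R u) (b *\<^sub>R w)) = a * b * det (cols u w)" by (simp add: det_cols algebra_simps)
  have "det (cols (a *\<^sub>R u) (b *\<^sub>R w)) \<noteq> 0" unfolding D using a b d by simp
  note kb = kap_bound[OF this]
  have F: "(cols (a *\<^sub>R u) (b *\<^sub>R w))$1$1^2 + (cols (a *\<^sub>R u) (b *\<^sub>R w))$1$2^2 +
           (cols (a *\<^sub>R u) (b *\<^sub>R w))$2$1^2 + (cols (a *\<^sub>R u) (b *\<^sub>R w))$2$2^2 = a^2 + b^2"
    unfolding frob_cols using u w by (simp add: power_mult_distrib)
  show ?thesis using kb unfolding F D by (simp add: abs_mult)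
qed

lemma cols_diag: "cols u w ** M2 1 0 0 s = cols u (s *\<^sub>R w)"
  by (simp add: cols_def mult.commute)

context cocy
begin

definition C2 :: real where "C2 = 1 / \<delta>"
definition Mth :: real where "Mth = 2 * (4 * K0 * C2 / \<epsilon>)^2 + 1"
definition Bd :: real where "Bd = 2 * Mth^2"
definition N1 :: nat where "N1 = nat (ceiling (2 * pi * K0 * Bd * C2 / \<epsilon>)) + 1"

lemma C2_pos: "0 < C2" using delta_pos by (simp add: C2_def)
lemma Mth_ge1: "1 \<le> Mth" by (simp add: Mth_def)
lemma Bd_ge: "2 * Mth \<le> Bd" "1 \<le> Bd"
proof -
  have "Mth \<le> Mth^2" using Mth_ge1 by (simp add: power2_eq_square)
  thus "2 * Mth \<le> Bd" by (simp add: Bd_def)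
  thus "1 \<le> Bd" using Mth_ge1 by simp
qed

lemma inv_det_le: "1 / \<bar>det (cols (fv y) (gv y))\<bar> \<le> C2"
  unfolding C2_def using angle_bound[of y] delta_pos by (simp add: frac_le)

lemma C3: assumes m: "0 < m" "m < pr y" shows "rr m y \<le> Mth"
proof (rule ccontr)
  assume H: "\<not> rr m y \<le> Mth"
  interpret P: porb f y "pr y" by (rule porb_y)
  define Q where "Q = cols (fv y) (gv y)"
  have dQ: "det Q \<noteq> 0" using fv_gv(5) by (simp add: Q_def)
  have Q: "invertible Q" using dQ by (simp add: invertible_iff_det)
  have diag: "matrix_inv Q ** cocycle_pow A f (pr y) y ** Q = M2 (lo y) 0 0 (hi y)"
    unfolding Q_def using frame_diag[OF fv_gv(2) fv_gv(4) fv_gv(5)] by (simp add: Mr_def)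
  define \<sigma> where "\<sigma> = rr m y"
  have \<sigma>: "0 < \<sigma>" "Mth < \<sigma>" using rr_pos H by (auto simp: \<sigma>_def)
  have kq: "opnorm Q * opnorm (matrix_inv Q) \<le> 2 * C2"
  proof -
    have "opnorm Q * opnorm (matrix_inv Q) \<le> (1^2 + 1^2) / (\<bar>1\<bar> * \<bar>1\<bar> * \<bar>det (cols (fv y) (gv y))\<bar>)"
      using kap_cols[OF fv_gv(1,3) fv_gv(5), of 1 1] by (simp add: Q_def)
    also have "\<dots> = 2 * (1 / \<bar>det (cols (fv y) (gv y))\<bar>)" by simp
    also have "\<dots> \<le> 2 * C2" by (rule mult_left_mono[OF inv_det_le]) simp
    finally show ?thesis .
  qed
  obtain c1 where c1: "Cp m y *v fv y = c1 *\<^sub>R fv ((f^^m) y)" "\<bar>c1\<bar> = nf m y" "c1 \<noteq> 0"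
    using Cp_fv[of m y] unfolding nf_def by blast
  obtain c2 where c2: "Cp m y *v gv y = c2 *\<^sub>R gv ((f^^m) y)" "\<bar>c2\<bar> = ng m y" "c2 \<noteq> 0"
    using Cp_gv[of m y] unfolding ng_def by blast
  have Q': "cocycle_pow A f m y ** Q ** M2 1 0 0 \<sigma> = cols (c1 *\<^sub>R fv ((f^^m) y)) ((\<sigma> * c2) *\<^sub>R gv ((f^^m) y))"
    unfolding Q_def mult_cols cols_diag using c1(1) c2(1) by (simp add: Cp_def)
  have sc: "\<bar>\<sigma> * c2\<bar> = \<bar>c1\<bar>" using c1 c2 \<sigma> ng_pos[of m y] by (simp add: \<sigma>_def rr_def abs_mult)
  have kq': "opnorm (cocycle_pow A f m y ** Q ** M2 1 0 0 \<sigma>) *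
             opnorm (matrix_inv (cocycle_pow A f m y ** Q ** M2 1 0 0 \<sigma>)) \<le> 2 * C2"
  proof -
    have nz: "\<sigma> * c2 \<noteq> 0" using \<sigma> c2 by simp
    have "opnorm (cocycle_pow A f m y ** Q ** M2 1 0 0 \<sigma>) * opnorm (matrix_inv (cocycle_pow A f m y ** Q ** M2 1 0 0 \<sigma>))
          \<le> (c1^2 + (\<sigma> * c2)^2) / (\<bar>c1\<bar> * \<bar>\<sigma> * c2\<bar> * \<bar>det (cols (fv ((f^^m) y)) (gv ((f^^m) y)))\<bar>)"
      unfolding Q' by (rule kap_cols[OF fv_gv(1,3) fv_gv(5) c1(3) nz])
    also have "\<dots> = 2 * (1 / \<bar>det (cols (fv ((f^^m) y)) (gv ((f^^m) y)))\<bar>)"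
    proof -
      have "(\<sigma> * c2)^2 = c1^2" using sc by (metis power2_abs)
      moreover have "c1^2 = \<bar>c1\<bar> * \<bar>c1\<bar>" by (simp add: power2_eq_square abs_mult_self_eq)
      ultimately show ?thesis using sc c1(3) fv_gv(5)[of "(f^^m) y"] by (simp add: field_simps)
    qed
    also have "\<dots> \<le> 2 * C2" by (rule mult_left_mono[OF inv_det_le]) simp
    finally show ?thesis .
  qed
  have small: "K0 * (2 * (2 * C2) * sqrt (2 / \<sigma>)) < \<epsilon>"
  proof -
    define z where "z = 4 * K0 * C2 / \<epsilon>"
    have z0: "0 < z" using K0 C2_pos eps by (simp add: z_def)
    have "2 * z^2 < \<sigma>" using \<sigma> by (simp add: Mth_def z_def)
    hence "2 / \<sigma> < 1 / z^2" using \<sigma> z0 by (simp add: field_simps)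
    hence "sqrt (2 / \<sigma>) < sqrt (1 / z^2)" by (rule real_sqrt_less_mono)
    hence "sqrt (2 / \<sigma>) < 1 / z" using z0 by (simp add: real_sqrt_divide)
    hence "4 * K0 * C2 * sqrt (2 / \<sigma>) < 4 * K0 * C2 * (1 / z)"
      by (rule mult_strict_left_mono) (use K0 C2_pos in simp)
    also have "\<dots> = \<epsilon>" using K0 C2_pos eps by (simp add: z_def)
    finally show ?thesis by (simp add: algebra_simps)
  qed
  have "\<exists>\<gamma>. good f A \<epsilon> y \<gamma>"
    by (rule P.mech3[OF Ainv Ab1 Ab2 m Q diag lo_pos lo_le_hi \<sigma>(1) kq kq' small])
  thus False using nogood by blast
qed

lemma C1:
  assumes n: "N1 \<le> n" "n \<le> pr y" and band: "\<And>k. k < n \<Longrightarrow> 1 / Bd \<le> rr k y \<and> rr k y \<le> Bd"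
  shows False
proof -
  interpret P: porb f y "pr y" by (rule porb_y)
  define Q where "Q = cols (fv y) (gv y)"
  have dQ: "det Q \<noteq> 0" using fv_gv(5) by (simp add: Q_def)
  have Q: "invertible Q" using dQ by (simp add: invertible_iff_det)
  have diag: "matrix_inv Q ** cocycle_pow A f (pr y) y ** Q = M2 (lo y) 0 0 (hi y)"
    unfolding Q_def using frame_diag[OF fv_gv(2) fv_gv(4) fv_gv(5)] by (simp add: Mr_def)
  have n1: "1 \<le> n" using n by (simp add: N1_def)
  have kap: "opnorm (cocycle_pow A f k y ** Q) * opnorm (matrix_inv (cocycle_pow A f k y ** Q)) \<le> 2 * Bd * C2"
    if k: "k < n" for k
  proof -
    obtain c1 where c1: "Cp k y *v fv y = c1 *\<^sub>R fv ((f^^k) y)" "\<bar>c1\<bar> = nf k y" "c1 \<noteq> 0"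
      using Cp_fv[of k y] unfolding nf_def by blast
    obtain c2 where c2: "Cp k y *v gv y = c2 *\<^sub>R gv ((f^^k) y)" "\<bar>c2\<bar> = ng k y" "c2 \<noteq> 0"
      using Cp_gv[of k y] unfolding ng_def by blast
    have CQ: "cocycle_pow A f k y ** Q = cols (c1 *\<^sub>R fv ((f^^k) y)) (c2 *\<^sub>R gv ((f^^k) y))"
      unfolding Q_def mult_cols using c1(1) c2(1) by (simp add: Cp_def)
    have "opnorm (cocycle_pow A f k y ** Q) * opnorm (matrix_inv (cocycle_pow A f k y ** Q))
          \<le> (c1^2 + c2^2) / (\<bar>c1\<bar> * \<bar>c2\<bar> * \<bar>det (cols (fv ((f^^k) y)) (gv ((f^^k) y)))\<bar>)"
      unfolding CQ by (rule kap_cols[OF fv_gv(1,3) fv_gv(5) c1(3) c2(3)])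
    also have "\<dots> = (rr k y + 1 / rr k y) * (1 / \<bar>det (cols (fv ((f^^k) y)) (gv ((f^^k) y)))\<bar>)"
    proof -
      have "c1^2 = \<bar>c1\<bar> * \<bar>c1\<bar>" "c2^2 = \<bar>c2\<bar> * \<bar>c2\<bar>" by (simp_all add: power2_eq_square abs_mult_self_eq)
      thus ?thesis using c1 c2 nf_pos[of k y] ng_pos[of k y] fv_gv(5)[of "(f^^k) y"]
        by (simp add: rr_def field_simps)
    qed
    also have "\<dots> \<le> (2 * Bd) * C2"
    proof (rule mult_mono)
      have b: "1 / Bd \<le> rr k y" "rr k y \<le> Bd" using band[OF k] by auto
      have "1 / rr k y \<le> Bd" using b rr_pos[of k y] Bd_ge by (simp add: divide_le_eq mult.commute)
      thus "rr k y + 1 / rr k y \<le> 2 * Bd" using b by simp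
      show "1 / \<bar>det (cols (fv ((f^^k) y)) (gv ((f^^k) y)))\<bar> \<le> C2" by (rule inv_det_le)
      show "0 \<le> 2 * Bd" using Bd_ge by simp
      show "0 \<le> 1 / \<bar>det (cols (fv ((f^^k) y)) (gv ((f^^k) y)))\<bar>" by simp
    qed
    finally show ?thesis by simp
  qed
  have trp: "0 < tr2 (cocycle_pow A f (pr y) y)" using tr_Mr[of y] lo_pos[of y] lo_le_hi[of y] by (simp add: Mr_def)
  have dtp: "0 < det (cocycle_pow A f (pr y) y)"
  proof -
    have "0 < lo y * hi y" using lo_pos[of y] lo_le_hi[of y] by (intro mult_pos_pos) auto
    hence "0 < det (Mr y)" using det_Mr[of y] by simp
    thus ?thesis unfolding Mr_def .
  qed
  have small: "K0 * (2 * (2 * Bd * C2) * ((pi/2) / real n)) < \<epsilon>"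
  proof -
    have "2 * pi * K0 * Bd * C2 / \<epsilon> < real N1"
      unfolding N1_def by linarith
    also have "\<dots> \<le> real n" using n by simp
    finally have "2 * pi * K0 * Bd * C2 / \<epsilon> < real n" .
    hence "2 * pi * K0 * Bd * C2 < \<epsilon> * real n" using eps by (simp add: divide_less_eq mult.commute)
    thus ?thesis using n1 by (simp add: field_simps)
  qed
  have "\<exists>\<gamma>. good f A \<epsilon> y \<gamma>"
    by (rule P.mechG[OF Ainv Ab1 Ab2 n1 n(2) Q kap _ _ small trp dtp]) (use dtp in \<open>auto simp: diag\<close>)
  thus False using nogood by blast
qed

end


lemma inv_vec_cancel: "invertible (M::mat2) \<Longrightarrow> M *v (matrix_inv M *v w) = w"
  by (simp add: matrix_vector_mul_assoc matrix_inv_right)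

context cocy
begin

lemma ratio: "0 < lo y / hi y" "lo y / hi y \<le> 1" "lo y / hi y \<le> (cos phb)^2"
  using lo_pos[of y] lo_le_hi[of y] ratio_bound[of y] by auto

lemma rr_le_Mth: "rr k z \<le> Mth"
proof -
  define p where "p = pr z"
  have p: "0 < p" using pr_pos by (simp add: p_def)
  have k: "k = (k div p) * p + k mod p" by simp
  have "rr k z = (lo z / hi z)^(k div p) * rr (k mod p) z"
    using rr_qp[of "k div p" z "k mod p"] k by (simp add: p_def)
  also have "\<dots> \<le> 1 * Mth"
  proof (rule mult_mono)
    show "(lo z / hi z)^(k div p) \<le> 1" using ratio[of z] by (simp add: power_le_one)
    show "rr (k mod p) z \<le> Mth"
    proof (cases "k mod p = 0")
      case True thus ?thesis using rr_0 Mth_ge1 by simp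
    next
      case False
      thus ?thesis using C3[of "k mod p" z] p by (simp add: p_def)
    qed
    show "0 \<le> (1::real)" by simp
    show "0 \<le> rr (k mod p) z" using rr_pos[of "k mod p" z] by simp
  qed
  finally show ?thesis by simp
qed

lemma rr_lower: "k \<le> N \<Longrightarrow> rr N x / Mth \<le> rr k x"
proof -
  assume "k \<le> N"
  hence "rr N x = rr k x * rr (N - k) ((f^^k) x)" using rr_add[of k "N - k" x] by simp
  also have "\<dots> \<le> rr k x * Mth" using rr_le_Mth rr_pos by (intro mult_left_mono) (auto intro: less_imp_le)
  finally show ?thesis using Mth_ge1 by (simp add: divide_le_eq)
qed

lemma r0: "(cos phb)^2 < 1" "0 \<le> (cos phb)^2"
  using cos_phb by (auto simp: power_less_one_iff abs_less_iff)

definition Q0 :: nat where "Q0 = (SOME q. ((cos phb)^2)^q < 1 / (2 * Mth))"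

lemma Q0: "((cos phb)^2)^Q0 < 1 / (2 * Mth)"
proof -
  have "\<exists>q. ((cos phb)^2)^q < 1 / (2 * Mth)"
    using real_arch_pow_inv[of "1 / (2 * Mth)" "(cos phb)^2"] r0 Mth_ge1 by simp
  thus ?thesis unfolding Q0_def by (rule someI_ex)
qed

definition NN :: nat where "NN = N1 * (Q0 + 1)"

lemma NN: "N1 \<le> NN" "1 \<le> NN" "1 \<le> N1"
  by (auto simp: NN_def N1_def)

lemma rr_NN: "rr NN x < 1/2"
proof (rule ccontr)
  assume "\<not> rr NN x < 1/2"
  hence H: "1/2 \<le> rr NN x" by simp
  define p where "p = pr x"
  have p: "0 < p" using pr_pos by (simp add: p_def)
  let ?l = "lo x / hi x"
  have Bd1: "1 / Bd \<le> 1 / (2 * Mth)" using Bd_ge Mth_ge1 by (simp add: frac_le)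
  show False
  proof (cases "NN \<le> p")
    case True
    have "\<And>k. k < NN \<Longrightarrow> 1 / Bd \<le> rr k x \<and> rr k x \<le> Bd"
    proof
      fix k assume k: "k < NN"
      have "1 / (2 * Mth) \<le> rr NN x / Mth" using H Mth_ge1 by (simp add: field_simps)
      also have "\<dots> \<le> rr k x" using rr_lower k by simp
      finally show "1 / Bd \<le> rr k x" using Bd1 by simp
      show "rr k x \<le> Bd" using rr_le_Mth[of k x] Bd_ge Mth_ge1 by simp
    qed
    thus False using C1[of NN x] NN True by (simp add: p_def)
  next
    case False
    define q where "q = NN div p"
    define m where "m = NN mod p"
    have "p div p \<le> NN div p" using False by (intro div_le_mono) simp
    hence q1: "1 \<le> q" using p by (simp add: q_def)
    have e: "q * pr x + m = NN" unfolding q_def m_def p_def by (rule div_mult_mod_eq)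
    have "rr NN x = ?l^q * rr m x" using rr_qp[of q x m] unfolding e .
    also have "\<dots> \<le> ?l^q * Mth" using ratio[of x] rr_le_Mth by (intro mult_left_mono) auto
    finally have "1/2 \<le> ?l^q * Mth" using H by simp
    hence lq: "1 / (2 * Mth) \<le> ?l^q" using Mth_ge1 by (simp add: field_simps)
    have lql: "?l^q \<le> ?l" using power_decreasing[of 1 q ?l] ratio[of x] q1 by simp
    show False
    proof (cases "N1 \<le> p")
      case True
      have "\<And>k. k < p \<Longrightarrow> 1 / Bd \<le> rr k x \<and> rr k x \<le> Bd"
      proof
        fix k assume k: "k < p"
        have "1 / Bd = 1 / (2 * Mth) / Mth" using Mth_ge1 by (simp add: Bd_def power2_eq_square)
        also have "\<dots> \<le> ?l / Mth"
        proof (rule divide_right_mono)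
          show "1 / (2 * Mth) \<le> ?l" using lq lql by linarith
        qed (use Mth_ge1 in simp)
        also have "\<dots> = rr p x / Mth" using rr_period by (simp add: p_def)
        also have "\<dots> \<le> rr k x" using rr_lower k by simp
        finally show "1 / Bd \<le> rr k x" .
        show "rr k x \<le> Bd" using rr_le_Mth[of k x] Bd_ge Mth_ge1 by simp
      qed
      thus False using C1[of p x] True by (simp add: p_def)
    next
      case False
      have "Q0 + 1 = NN div N1" using NN by (simp add: NN_def)
      also have "\<dots> \<le> NN div p" using False p by (intro div_le_mono2) auto
      finally have qQ: "Q0 + 1 \<le> q" by (simp add: q_def)
      have "?l^q \<le> ((cos phb)^2)^q" using ratio[of x] by (intro power_mono) auto
      also have "\<dots> \<le> ((cos phb)^2)^Q0" using r0 qQ by (intro power_decreasing) auto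
      also have "\<dots> < 1 / (2 * Mth)" by (rule Q0)
      finally show False using lq by simp
    qed
  qed
qed

lemma Fs_sub: "subspace (Fs y)" and Gs_sub: "subspace (Gs y)"
  by (auto simp: subspace_def Fs_def Gs_def mat_vec_add mat_vec_scaleR algebra_simps)

lemma Fs_inv: "(\<lambda>v. A y *v v) ` Fs y = Fs (f y)" and Gs_inv: "(\<lambda>v. A y *v v) ` Gs y = Gs (f y)"
proof -
  have C1: "Cp 1 y = A y" by (simp add: Cp_def)
  have Mx: "Mr y = matrix_inv (A y) ** Mr (f y) ** A y"
    using Mr_conj[of 1 y] unfolding C1 by (simp add: matrix_mul_assoc[symmetric] inv_cancel[OF Ainv])
  have lh: "lo (f y) = lo y" "hi (f y) = hi y" using lo_hi_iter[of 1 y] by simp_all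
  show "(\<lambda>v. A y *v v) ` Fs y = Fs (f y)"
  proof
    show "(\<lambda>v. A y *v v) ` Fs y \<subseteq> Fs (f y)" using Cp_Fs[of _ y 1] C1 by auto
    show "Fs (f y) \<subseteq> (\<lambda>v. A y *v v) ` Fs y"
    proof
      fix w assume w: "w \<in> Fs (f y)"
      have "matrix_inv (A y) *v w \<in> Fs y"
        using w lh unfolding Fs_def Mx
        by (simp add: matrix_vector_mul_assoc[symmetric] mat_vec_scaleR inv_vec_cancel[OF Ainv])
      moreover have "w = A y *v (matrix_inv (A y) *v w)"
        by (simp add: matrix_vector_mul_assoc matrix_inv_right[OF Ainv])
      ultimately show "w \<in> (\<lambda>v. A y *v v) ` Fs y" by blast
    qed
  qed
  show "(\<lambda>v. A y *v v) ` Gs y = Gs (f y)"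
  proof
    show "(\<lambda>v. A y *v v) ` Gs y \<subseteq> Gs (f y)" using Cp_Gs[of _ y 1] C1 by auto
    show "Gs (f y) \<subseteq> (\<lambda>v. A y *v v) ` Gs y"
    proof
      fix w assume w: "w \<in> Gs (f y)"
      have "matrix_inv (A y) *v w \<in> Gs y"
        using w lh unfolding Gs_def Mx
        by (simp add: matrix_vector_mul_assoc[symmetric] mat_vec_scaleR inv_vec_cancel[OF Ainv])
      moreover have "w = A y *v (matrix_inv (A y) *v w)"
        by (simp add: matrix_vector_mul_assoc matrix_inv_right[OF Ainv])
      ultimately show "w \<in> (\<lambda>v. A y *v v) ` Gs y" by blast
    qed
  qed
qed

lemma dom_parts:
  "subspace (Fs x)" "subspace (Gs x)" "Fs x \<noteq> {0}" "Gs x \<noteq> {0}" "Fs x \<inter> Gs x = {0}"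
  "\<forall>v. \<exists>u\<in>Fs x. \<exists>w\<in>Gs x. v = u + w"
proof -
  show "subspace (Fs x)" "subspace (Gs x)" by (rule Fs_sub, rule Gs_sub)
  show "Fs x \<noteq> {0}" using fv_in[of x] fv_nz[of x] by auto
  show "Gs x \<noteq> {0}" using gv_in[of x] gv_nz[of x] by auto
  show "Fs x \<inter> Gs x = {0}"
  proof
    show "Fs x \<inter> Gs x \<subseteq> {0}"
    proof
      fix v assume "v \<in> Fs x \<inter> Gs x"
      hence "lo x = hi x \<or> v = 0" by (auto simp: Fs_def Gs_def)
      thus "v \<in> {0}" using lo_lt_hi[of x] by auto
    qed
    show "{0} \<subseteq> Fs x \<inter> Gs x" by (simp add: Fs_def Gs_def)
  qed
  show "\<forall>v. \<exists>u\<in>Fs x. \<exists>w\<in>Gs x. v = u + w"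
  proof
    fix v :: "real^2"
    obtain a b where ab: "v = a *\<^sub>R fv x + b *\<^sub>R gv x" using frame_coords[OF fv_gv(5)] by blast
    have "a *\<^sub>R fv x \<in> Fs x" "b *\<^sub>R gv x \<in> Gs x"
      using fv_in gv_in Fs_sub Gs_sub by (auto simp: subspace_def)
    thus "\<exists>u\<in>Fs x. \<exists>w\<in>Gs x. v = u + w" using ab by blast
  qed
qed

lemma dom_n: "\<exists>n\<ge>1. \<forall>x. restr_norm (cocycle_pow A f n x) (Fs x) *
          restr_norm (matrix_inv (cocycle_pow A f n x)) (Gs ((f ^^ n) x)) < 1 / 2"
proof (intro exI[of _ NN] conjI allI)
  show "1 \<le> NN" by (rule NN(2))
  fix x
  show "restr_norm (cocycle_pow A f NN x) (Fs x) *
        restr_norm (matrix_inv (cocycle_pow A f NN x)) (Gs ((f ^^ NN) x)) < 1 / 2"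
    using dom_prod[of NN x] rr_NN[of x] unfolding Cp_def by simp
qed

lemma dominated: "dominated_splitting f A"
  unfolding dominated_splitting_def
  using dom_parts Fs_inv Gs_inv dom_n by blast

end


theorem lemma3p8:
  fixes K \<epsilon> :: real and f :: "'a::topological_space \<Rightarrow> 'a" and A :: "'a \<Rightarrow> mat2"
  assumes "K > 0" and "\<epsilon> > 0"
    and "is_linear_cocycle f A"
    and "periodic_map f"
    and "diagonalizable_pos f A"
    and "bounded_by A K"
    and "\<not> dominated_splitting f A"
  shows "\<exists>X \<gamma>. C_path f X \<gamma>
           \<and> (\<forall>x\<in>orbit f X. \<gamma> 0 x = A x)
           \<and> C_diam f X \<gamma> < \<epsilon>
           \<and> (\<forall>s\<in>{0..1}. \<forall>t\<in>{0..1}. det (return_map f (\<gamma> s) X) = det (return_map f (\<gamma> t) X))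
           \<and> (\<forall>s\<in>{0..1}. \<forall>t\<in>{0..1}. s < t \<longrightarrow>
                 lam_m (return_map f (\<gamma> s) X) \<le> lam_m (return_map f (\<gamma> t) X)
               \<and> lam_b (return_map f (\<gamma> s) X) \<ge> lam_b (return_map f (\<gamma> t) X))
           \<and> (\<exists>z w. z \<in> cx_eigenvalues (return_map f (\<gamma> 1) X) \<and> w \<in> cx_eigenvalues (return_map f (\<gamma> 1) X)
                 \<and> z \<noteq> w \<and> Im z \<noteq> 0 \<and> Im w \<noteq> 0)"
proof -
  obtain K1 where K1: "K1 < K" "\<And>x. opnorm (A x) \<le> K1"
    using assms(6) unfolding bounded_by_def by blast
  obtain K2 where K2: "K2 < K" "\<And>x. opnorm (matrix_inv (A x)) \<le> K2"
    using assms(6) unfolding bounded_by_def by blast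
  define K0 where "K0 = max (max K1 K2) 1"
  have Ab1: "\<And>x. opnorm (A x) \<le> K0" using K1(2) unfolding K0_def by (meson max.coboundedI1 order_trans)
  have Ab2: "\<And>x. opnorm (matrix_inv (A x)) \<le> K0" using K2(2) unfolding K0_def by (meson max.coboundedI1 max.coboundedI2 order_trans)
  have K0: "0 < K0" unfolding K0_def by simp
  obtain g where hom: "homeomorphism UNIV UNIV f g" and Ainv: "\<And>x. invertible (A x)"
    using assms(3) unfolding is_linear_cocycle_def by blast
  have inj: "inj f"
  proof (rule inj_on_inverseI)
    fix x :: 'a show "g (f x) = x" using hom unfolding homeomorphism_def by blast
  qed
  show ?thesis
  proof (rule ccontr)
    assume H: "\<not> ?thesis"
    have nogood: "\<And>X \<gamma>. \<not> good f A \<epsilon> X \<gamma>" using H unfolding good_def by blast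
    interpret cocy f A K0 \<epsilon>
      by (unfold_locales) (use inj assms(4) Ainv Ab1 Ab2 K0 assms(2) assms(5) nogood in auto)
    have "dominated_splitting f A" by (rule dominated)
    thus False using assms(7) by blast
  qed
qed


end
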